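(* Let $F=A^\sharp\circ B\circ P$, with $A\in\mathbb{T}^{m\times n}$ having at least one finite entry per column, $B\in\mathbb{T}^{m\times q}$ having at least one finite entry per row, finite entries of $A,B$ integers, and $P\in\mathbb{R}^{q\times n}$ row-stochastic with $P_{il}=Q_{il}/M$ for integers $Q_{il}$ and a positive integer $M$. Suppose $F$ has a bias vector and $\rho(F)\ne0$. Consider value iteration: $u^0=0$, $u^{\ell+1}=F(u^\ell)$, continued while $\max_i u^\ell_i\ge0$ and $\min_i u^\ell_i\le 0$, stopping at the first index $N$ where this fails, and answering "Player Min wins" if $\max_i u^N_i<0$, "Player Max wins" otherwise. Then \[ N\le 10\,n^3\,W\,M^{2\min\{k,n-1\}}, \] and the answer is correct ("Player Min wins" iff $\rho(F)<0$).
   Context: $\mathbb{T}=\mathbb{R}\cup\{-\infty\}$. For $C\in\mathbb{T}^{r\times s}$: $(C\odot z)_i=\max_j(C_{ij}+z_j)$; $C^\sharp(y)_j=\min_i(-C_{ij}+y_i)$ with $(+\infty)+(-\infty)=+\infty$; $Pz$ is the usual product with $0\cdot(-\infty)=0$; $F(x)=A^\sharp(B\odot(Px))$. $W=\max\{|A_{ij}-B_{ih}|: A_{ij}\ne-\infty,\ B_{ih}\ne-\infty\}$. $k$ is the number of nondeterministic states, a state $i\in[q]$ being nondeterministic if $P_{il}>0$ and $P_{il'}>0$ for some $l\ne l'$. A bias vector is $v\in\mathbb{R}^n$ with $F(v)=\lambda+v$ for some $\lambda\in\mathbb{R}$; this $\lambda=\rho(F)$ is unique (ergodic constant). *)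

theory Defs
  imports "HOL-Library.Extended_Real"
begin

text \<open>Tropical semiring T = R \<union> {-\<infinity>} is represented inside ereal; entries are
  assumed to lie in T (never +\<infinity>).\<close>

definition trop_mv :: "nat \<Rightarrow> (nat \<Rightarrow> nat \<Rightarrow> ereal) \<Rightarrow> (nat \<Rightarrow> ereal) \<Rightarrow> nat \<Rightarrow> ereal" where
  "trop_mv s C z i = Max ((\<lambda>j. C i j + z j) ` {..<s})"

text \<open>C^sharp(y)_j = min_{i<r} (-C_ij + y_i) with (+\<infinity>) + (-\<infinity>) = +\<infinity>,
  for C with r rows.\<close>
definition trop_sharp :: "nat \<Rightarrow> (nat \<Rightarrow> nat \<Rightarrow> ereal) \<Rightarrow> (nat \<Rightarrow> ereal) \<Rightarrow> nat \<Rightarrow> ereal" where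
  "trop_sharp r C y j = Min ((\<lambda>i. if C i j = -\<infinity> then \<infinity> else - C i j + y i) ` {..<r})"

definition mat_vec :: "nat \<Rightarrow> (nat \<Rightarrow> nat \<Rightarrow> real) \<Rightarrow> (nat \<Rightarrow> real) \<Rightarrow> nat \<Rightarrow> real" where
  "mat_vec n P z i = (\<Sum>l<n. P i l * z l)"

definition shapley :: "nat \<Rightarrow> nat \<Rightarrow> nat \<Rightarrow> (nat \<Rightarrow> nat \<Rightarrow> ereal) \<Rightarrow> (nat \<Rightarrow> nat \<Rightarrow> ereal)
    \<Rightarrow> (nat \<Rightarrow> nat \<Rightarrow> real) \<Rightarrow> (nat \<Rightarrow> real) \<Rightarrow> nat \<Rightarrow> real" where
  "shapley m n q A B P x =
     (\<lambda>j. real_of_ereal (trop_sharp m A (trop_mv q B (\<lambda>h. ereal (mat_vec n P x h))) j))"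

definition weight_W :: "nat \<Rightarrow> nat \<Rightarrow> nat \<Rightarrow> (nat \<Rightarrow> nat \<Rightarrow> ereal) \<Rightarrow> (nat \<Rightarrow> nat \<Rightarrow> ereal) \<Rightarrow> real" where
  "weight_W m n q A B = Max {\<bar>real_of_ereal (A i j) - real_of_ereal (B i h)\<bar> | i j h.
      i < m \<and> j < n \<and> h < q \<and> A i j \<noteq> -\<infinity> \<and> B i h \<noteq> -\<infinity>}"

definition num_nondet :: "nat \<Rightarrow> nat \<Rightarrow> (nat \<Rightarrow> nat \<Rightarrow> real) \<Rightarrow> nat" where
  "num_nondet q n P = card {i. i < q \<and> (\<exists>l l'. l < n \<and> l' < n \<and> l \<noteq> l' \<and> P i l > 0 \<and> P i l' > 0)}"

definition is_bias :: "nat \<Rightarrow> ((nat \<Rightarrow> real) \<Rightarrow> nat \<Rightarrow> real) \<Rightarrow> real \<Rightarrow> (nat \<Rightarrow> real) \<Rightarrow> bool" where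
  "is_bias n F lam v \<longleftrightarrow> (\<forall>j<n. F v j = lam + v j)"

definition has_bias :: "nat \<Rightarrow> ((nat \<Rightarrow> real) \<Rightarrow> nat \<Rightarrow> real) \<Rightarrow> bool" where
  "has_bias n F \<longleftrightarrow> (\<exists>lam v. is_bias n F lam v)"

text \<open>Ergodic constant rho(F) (unique when a bias vector exists).\<close>
definition ergodic_const :: "nat \<Rightarrow> ((nat \<Rightarrow> real) \<Rightarrow> nat \<Rightarrow> real) \<Rightarrow> real" where
  "ergodic_const n F = (THE lam. \<exists>v. is_bias n F lam v)"

definition value_iter :: "((nat \<Rightarrow> real) \<Rightarrow> nat \<Rightarrow> real) \<Rightarrow> nat \<Rightarrow> nat \<Rightarrow> real" where
  "value_iter F l = (F ^^ l) (\<lambda>_. 0)"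

definition vi_continue :: "nat \<Rightarrow> ((nat \<Rightarrow> real) \<Rightarrow> nat \<Rightarrow> real) \<Rightarrow> nat \<Rightarrow> bool" where
  "vi_continue n F l \<longleftrightarrow>
     Max ((value_iter F l) ` {..<n}) \<ge> 0 \<and> Min ((value_iter F l) ` {..<n}) \<le> 0"

definition vi_stop :: "nat \<Rightarrow> ((nat \<Rightarrow> real) \<Rightarrow> nat \<Rightarrow> real) \<Rightarrow> nat" where
  "vi_stop n F = (LEAST l. \<not> vi_continue n F l)"

definition vi_answer_min_wins :: "nat \<Rightarrow> ((nat \<Rightarrow> real) \<Rightarrow> nat \<Rightarrow> real) \<Rightarrow> bool" where
  "vi_answer_min_wins n F \<longleftrightarrow> Max ((value_iter F (vi_stop n F)) ` {..<n}) < 0"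

end

theory Submission
  imports Defs "Jordan_Normal_Form.Determinant"
begin

definition IM :: "nat \<Rightarrow> (nat \<Rightarrow> nat \<Rightarrow> real) \<Rightarrow> real mat" where
  "IM d f = mat d d (\<lambda>(i,j). (if i = j then 1 else 0) - f i j)"

lemma IM_carrier[simp]: "IM d f \<in> carrier_mat d d" unfolding IM_def by auto
lemma IM_dim[simp]: "dim_row (IM d f) = d" "dim_col (IM d f) = d" unfolding IM_def by auto

lemma IM_index[simp]: "i < d \<Longrightarrow> j < d \<Longrightarrow> IM d f $$ (i,j) = (if i = j then 1 else 0) - f i j"
  unfolding IM_def by auto

lemma det_zero_row:
  fixes A :: "'a::comm_ring_1 mat"
  assumes A: "A \<in> carrier_mat d d" and e: "e < d" and z: "\<And>j. j < d \<Longrightarrow> A $$ (e,j) = 0"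
  shows "det A = 0"
proof -
  have "\<And>p. p permutes {0..<d} \<Longrightarrow> (\<Prod>i = 0..<d. A $$ (i, p i)) = 0"
  proof -
    fix p assume p: "p permutes {0..<d}"
    have "p e < d" using p e by (simp add: permutes_in_image)
    hence "A $$ (e, p e) = 0" using z by auto
    thus "(\<Prod>i = 0..<d. A $$ (i, p i)) = 0" using e by (intro prod_zero) auto
  qed
  thus ?thesis unfolding det_def'[OF A] by (intro sum.neutral) auto
qed

lemma det_IM_substoch:
  assumes "\<And>i j. i < d \<Longrightarrow> j < d \<Longrightarrow> f i j \<ge> 0"
    and "\<And>i. i < d \<Longrightarrow> (\<Sum>j<d. f i j) \<le> 1"
  shows "0 \<le> det (IM d f) \<and> det (IM d f) \<le> 1"
  using assms
proof (induction d arbitrary: f)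
  case 0
  then show ?case by (simp add: det_dim_zero)
next
  case (Suc e)
  let ?d = "Suc e"
  let ?t = "f e e"
  have rs: "(\<Sum>j<?d. f e j) = (\<Sum>j<e. f e j) + ?t" by simp
  have sume: "(\<Sum>j<e. f e j) \<le> 1 - ?t" using Suc.prems(2)[of e] rs by simp
  have se0: "(\<Sum>j<e. f e j) \<ge> 0" using Suc.prems(1) by (intro sum_nonneg) auto
  show ?case
  proof (cases "?t < 1")
    case False
    hence t1: "?t = 1" using sume se0 by linarith
    have "\<forall>j<e. f e j = 0"
    proof -
      have "(\<Sum>j<e. f e j) = 0" using sume se0 t1 by linarith
      moreover have "\<forall>j\<in>{..<e}. f e j \<ge> 0" using Suc.prems(1) by auto
      ultimately show ?thesis using sum_nonneg_eq_0_iff[of "{..<e}" "f e"] by auto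
    qed
    hence "det (IM ?d f) = 0"
      by (intro det_zero_row[of _ ?d e]) (auto simp: t1 less_Suc_eq)
    then show ?thesis by simp
  next
    case True
    define E where "E = mat ?d ?d (\<lambda>(i,j). if i = j then 1 else if j = e \<and> i < e then f i e / (1 - ?t) else (0::real))"
    have Ec: "E \<in> carrier_mat ?d ?d" unfolding E_def by auto
    have detE: "det E = 1"
    proof -
      have "upper_triangular E" unfolding E_def by (intro upper_triangularI) auto
      hence "det E = prod_list (diag_mat E)" using det_upper_triangular Ec by blast
      also have "\<dots> = 1" unfolding prod_list_diag_prod by (intro prod.neutral) (auto simp: E_def)
      finally show ?thesis .
    qed
    let ?A = "IM ?d f"
    define B where "B = E * ?A"
    have Bc: "B \<in> carrier_mat ?d ?d" unfolding B_def using Ec by auto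
    have detB: "det B = det ?A" unfolding B_def using det_mult[OF Ec IM_carrier] detE by simp
    have Bent: "B $$ (i,j) = ?A $$ (i,j) + (if i < e then f i e / (1 - ?t) * ?A $$ (e,j) else 0)"
      if ij: "i < ?d" "j < ?d" for i j
    proof -
      have "B $$ (i,j) = (\<Sum>k<?d. E $$ (i,k) * ?A $$ (k,j))"
      proof -
        have "B $$ (i,j) = row E i \<bullet> col ?A j" unfolding B_def using ij Ec by (intro index_mult_mat(1)) auto
        also have "\<dots> = (\<Sum>k<?d. E $$ (i, k) * ?A $$ (k,j))"
          unfolding scalar_prod_def using ij Ec by (auto simp: lessThan_atLeast0 intro!: sum.cong)
        finally show ?thesis .
      qed
      also have "\<dots> = (\<Sum>k<?d. (if k = i then ?A $$ (k,j) else 0) + (if k = e \<and> i < e then f i e / (1 - ?t) * ?A $$ (k,j) else 0))"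
        using ij by (intro sum.cong) (auto simp: E_def)
      also have "\<dots> = ?A $$ (i,j) + (if i < e then f i e / (1 - ?t) * ?A $$ (e,j) else 0)"
        using ij by (simp add: sum.distrib)
      finally show ?thesis .
    qed
    have Bcol: "B $$ (i,e) = (if i = e then 1 - ?t else 0)" if "i < ?d" for i
      using Bent[of i e] that True by (auto simp: field_simps)
    have "det B = (\<Sum>i<?d. B $$ (i,e) * cofactor B i e)"
      using laplace_expansion_column[OF Bc] by auto
    also have "\<dots> = (\<Sum>i<?d. if i = e then (1 - ?t) * cofactor B e e else 0)"
      by (intro sum.cong) (auto simp: Bcol)
    also have "\<dots> = (1 - ?t) * cofactor B e e" by simp
    also have "cofactor B e e = det (mat_delete B e e)" unfolding cofactor_def by simp
    finally have dB: "det B = (1 - ?t) * det (mat_delete B e e)" .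
    define g where "g i j = f i j + f i e * f e j / (1 - ?t)" for i j
    have MD: "mat_delete B e e = IM e g"
    proof (rule eq_matI)
      fix i j assume ij: "i < dim_row (IM e g)" "j < dim_col (IM e g)"
      hence ij': "i < e" "j < e" unfolding IM_def by auto
      have "mat_delete B e e $$ (i,j) = B $$ (i,j)" using ij' Bc unfolding mat_delete_def by auto
      also have "\<dots> = IM e g $$ (i,j)" using ij' Bent[of i j] by (simp add: g_def field_simps)
      finally show "mat_delete B e e $$ (i,j) = IM e g $$ (i,j)" .
    qed (use Bc in auto)
    have g0: "g i j \<ge> 0" if "i < e" "j < e" for i j
      using Suc.prems(1) that True unfolding g_def by (auto intro!: add_nonneg_nonneg divide_nonneg_pos)
    have g1: "(\<Sum>j<e. g i j) \<le> 1" if i: "i < e" for i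
    proof -
      have "(\<Sum>j<e. g i j) = (\<Sum>j<e. f i j) + f i e / (1 - ?t) * (\<Sum>j<e. f e j)"
        unfolding g_def by (simp add: sum.distrib sum_distrib_left)
      also have "\<dots> \<le> (\<Sum>j<e. f i j) + f i e / (1 - ?t) * (1 - ?t)"
        using sume i Suc.prems(1)[of i e] True by (intro add_left_mono mult_left_mono) auto
      also have "\<dots> = (\<Sum>j<?d. f i j)" using True by simp
      also have "\<dots> \<le> 1" using Suc.prems(2) i by auto
      finally show ?thesis .
    qed
    have IH: "0 \<le> det (IM e g) \<and> det (IM e g) \<le> 1" using Suc.IH[of g] g0 g1 by blast
    have t0: "?t \<ge> 0" using Suc.prems(1) by auto
    have "det ?A = (1 - ?t) * det (IM e g)" using detB dB MD by simp
    then show ?thesis using IH True t0 by (auto intro: mult_nonneg_nonneg mult_le_one)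
  qed
qed

definition idx :: "nat \<Rightarrow> nat \<Rightarrow> nat" where "idx x i = (if i < x then i else Suc i)"

lemma idx_inj: "idx x i = idx x j \<longleftrightarrow> i = j" unfolding idx_def by auto
lemma idx_ne: "idx x i \<noteq> x" unfolding idx_def by auto
lemma idx_lt: "x < d \<Longrightarrow> i < d - 1 \<Longrightarrow> idx x i < d" unfolding idx_def by auto

lemma idx_bij: assumes "x < d" shows "bij_betw (idx x) {..<d-1} ({..<d} - {x})"
proof (rule bij_betwI')
  show "\<And>i j. i \<in> {..<d-1} \<Longrightarrow> j \<in> {..<d-1} \<Longrightarrow> (idx x i = idx x j) = (i = j)" using idx_inj by blast
  show "\<And>i. i \<in> {..<d-1} \<Longrightarrow> idx x i \<in> {..<d} - {x}" using assms idx_lt idx_ne by auto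
  show "\<exists>i\<in>{..<d-1}. z = idx x i" if "z \<in> {..<d} - {x}" for z
  proof (cases "z < x")
    case True then show ?thesis using that assms by (intro bexI[of _ z]) (auto simp: idx_def)
  next
    case False then show ?thesis using that assms by (intro bexI[of _ "z - 1"]) (auto simp: idx_def)
  qed
qed

lemma sum_del: assumes "x < d" shows "(\<Sum>z<d. g z) = g x + (\<Sum>i<d-1. g (idx x i))"
proof -
  have "(\<Sum>z<d. g z) = g x + (\<Sum>z\<in>{..<d}-{x}. g z)"
    using assms by (subst sum.remove[of _ x]) auto
  also have "(\<Sum>z\<in>{..<d}-{x}. g z) = (\<Sum>i<d-1. g (idx x i))"
    using sum.reindex_bij_betw[OF idx_bij[OF assms], of g] by simp
  finally show ?thesis .
qed

lemma card_del: assumes "x < d" "S \<subseteq> {..<d}"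
  shows "card {i. i < d - 1 \<and> idx x i \<in> S} = card (S - {x})"
proof -
  have "bij_betw (idx x) {i. i < d - 1 \<and> idx x i \<in> S} (S - {x})"
  proof (rule bij_betwI')
    show "\<And>i j. i \<in> {i. i < d - 1 \<and> idx x i \<in> S} \<Longrightarrow> j \<in> {i. i < d - 1 \<and> idx x i \<in> S} \<Longrightarrow> (idx x i = idx x j) = (i = j)" using idx_inj by blast
    show "\<And>i. i \<in> {i. i < d - 1 \<and> idx x i \<in> S} \<Longrightarrow> idx x i \<in> S - {x}" using idx_ne by auto
    show "\<exists>i\<in>{i. i < d - 1 \<and> idx x i \<in> S}. z = idx x i" if "z \<in> S - {x}" for z
    proof (cases "z < x")
      case True then show ?thesis using that assms by (intro bexI[of _ z]) (auto simp: idx_def)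
    next
      case False then show ?thesis using that assms by (intro bexI[of _ "z - 1"]) (auto simp: idx_def)
    qed
  qed
  thus ?thesis by (rule bij_betw_same_card)
qed

lemma mat_delete_idx: assumes "A \<in> carrier_mat d d" "i < d - 1" "j < d - 1"
  shows "mat_delete A x x $$ (i,j) = A $$ (idx x i, idx x j)"
  using assms unfolding mat_delete_def idx_def by auto

lemma mat_delete_IM: assumes "x < d"
  shows "mat_delete (IM d f) x x = IM (d-1) (\<lambda>i j. f (idx x i) (idx x j))"
proof (rule eq_matI)
  fix i j assume "i < dim_row (IM (d - 1) (\<lambda>i j. f (idx x i) (idx x j)))" "j < dim_col (IM (d - 1) (\<lambda>i j. f (idx x i) (idx x j)))"
  hence ij: "i < d - 1" "j < d - 1" by auto
  show "mat_delete (IM d f) x x $$ (i, j) = IM (d - 1) (\<lambda>i j. f (idx x i) (idx x j)) $$ (i, j)"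
    using mat_delete_idx[OF IM_carrier ij] ij assms idx_lt[OF assms] by (auto simp: idx_inj)
qed auto

lemma det_Ints:
  fixes B :: "real mat" and M :: int
  assumes B: "B \<in> carrier_mat d d"
    and S: "\<And>i j. i < d \<Longrightarrow> j < d \<Longrightarrow> i \<in> S \<Longrightarrow> real_of_int M * B $$ (i,j) \<in> \<int>"
    and nS: "\<And>i j. i < d \<Longrightarrow> j < d \<Longrightarrow> i \<notin> S \<Longrightarrow> B $$ (i,j) \<in> \<int>"
    and Ssub: "S \<subseteq> {..<d}"
  shows "real_of_int M ^ card S * det B \<in> \<int>"
proof -
  have fin: "finite S" using Ssub finite_subset by blast
  have pw: "real_of_int M ^ card S = (\<Prod>i = 0..<d. if i \<in> S then real_of_int M else 1)"
  proof -
    have "(\<Prod>i = 0..<d. if i \<in> S then real_of_int M else 1) = (\<Prod>i \<in> {0..<d} \<inter> S. real_of_int M)"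
      by (simp add: prod.If_cases)
    also have "{0..<d} \<inter> S = S" using Ssub by auto
    finally show ?thesis by simp
  qed
  have "real_of_int M ^ card S * det B = (\<Sum>p\<in>{p. p permutes {0..<d}}. of_int (sign p) * (\<Prod>i = 0..<d. (if i \<in> S then real_of_int M else 1) * B $$ (i, p i)))"
    unfolding det_def'[OF B] pw sum_distrib_left by (intro sum.cong refl) (simp add: prod.distrib ac_simps)
  also have "\<dots> \<in> \<int>"
  proof -
    have "(if i \<in> S then real_of_int M else 1) * B $$ (i, p i) \<in> \<int>" if p: "p permutes {0..<d}" and i: "i \<in> {0..<d}" for p i
    proof -
      have "p i < d" using p i by (auto simp: permutes_in_image)
      thus ?thesis using S nS i by auto
    qed
    note h = this
    show ?thesis
    proof (rule Ints_sum, rule Ints_mult)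
      fix p assume "p \<in> {p. p permutes {0..<d}}"
      thus "(\<Prod>i = 0..<d. (if i \<in> S then real_of_int M else 1) * B $$ (i, p i)) \<in> \<int>"
        using h by (intro Ints_prod) auto
    qed simp
  qed
  finally show ?thesis .
qed

definition edges :: "nat \<Rightarrow> (nat \<Rightarrow> nat \<Rightarrow> real) \<Rightarrow> (nat \<times> nat) set" where
  "edges d K = {(x,z). x < d \<and> z < d \<and> K x z > 0}"

lemma max_principle:
  fixes K :: "nat \<Rightarrow> nat \<Rightarrow> real"
  assumes nonneg: "\<And>x z. x < d \<Longrightarrow> z < d \<Longrightarrow> K x z \<ge> 0"
    and rows: "\<And>x. x < d \<Longrightarrow> x \<noteq> c \<Longrightarrow> (\<Sum>z<d. K x z) = 1"
    and harm: "\<And>x. x < d \<Longrightarrow> x \<noteq> c \<Longrightarrow> u x = (\<Sum>z<d. K x z * u z)"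
    and ub: "\<And>z. z < d \<Longrightarrow> u z \<le> mx"
    and path: "(y, c) \<in> (edges d K)\<^sup>*" and uy: "u y = mx"
  shows "u c = mx"
  using path uy
proof (induction rule: converse_rtrancl_induct)
  case base
  then show ?case by simp
next
  case (step y y')
  show ?case
  proof (cases "y = c")
    case True
    then show ?thesis using step by simp
  next
    case False
    have yy: "y < d" "y' < d" "K y y' > 0" using step(1) unfolding edges_def by auto
    have "(\<Sum>z<d. K y z * (mx - u z)) = mx * (\<Sum>z<d. K y z) - (\<Sum>z<d. K y z * u z)"
      by (simp add: algebra_simps sum_subtractf sum_distrib_left)
    also have "\<dots> = 0" using rows[OF yy(1) False] harm[OF yy(1) False] step(4) by simp
    finally have s0: "(\<Sum>z<d. K y z * (mx - u z)) = 0" .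
    have "\<forall>z\<in>{..<d}. K y z * (mx - u z) = 0"
      using iffD1[OF sum_nonneg_eq_0_iff s0] nonneg yy(1) ub by (auto intro!: mult_nonneg_nonneg)
    hence "K y y' * (mx - u y') = 0" using yy by blast
    hence "u y' = mx" using yy by simp
    then show ?thesis using step(3) by simp
  qed
qed

lemma harmonic_const:
  fixes K :: "nat \<Rightarrow> nat \<Rightarrow> real"
  assumes nonneg: "\<And>x z. x < d \<Longrightarrow> z < d \<Longrightarrow> K x z \<ge> 0"
    and rows: "\<And>x. x < d \<Longrightarrow> x \<noteq> c \<Longrightarrow> (\<Sum>z<d. K x z) = 1"
    and harm: "\<And>x. x < d \<Longrightarrow> x \<noteq> c \<Longrightarrow> u x = (\<Sum>z<d. K x z * u z)"
    and reach: "\<And>y. y < d \<Longrightarrow> (y, c) \<in> (edges d K)\<^sup>*"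
    and c: "c < d"
  shows "\<And>z. z < d \<Longrightarrow> u z = u c"
proof -
  have fin: "finite (u ` {..<d})" "u ` {..<d} \<noteq> {}" using c by auto
  obtain y1 where y1: "y1 < d" "u y1 = Max (u ` {..<d})"
    using Max_in[OF fin] by auto
  have ub: "\<And>z. z < d \<Longrightarrow> u z \<le> Max (u ` {..<d})" using fin by auto
  have mx: "u c = Max (u ` {..<d})"
    by (rule max_principle[OF nonneg rows harm ub reach[OF y1(1)] y1(2)]) auto
  obtain y2 where y2: "y2 < d" "u y2 = Min (u ` {..<d})"
    using Min_in[OF fin] by auto
  have lb: "\<And>z. z < d \<Longrightarrow> - u z \<le> - Min (u ` {..<d})" using fin by auto
  have harm': "\<And>x. x < d \<Longrightarrow> x \<noteq> c \<Longrightarrow> (- u x) = (\<Sum>z<d. K x z * (- u z))"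
    using harm by (simp add: sum_negf)
  have mn: "- u c = - Min (u ` {..<d})"
    by (rule max_principle[OF nonneg rows harm' lb reach[OF y2(1)]]) (use y2 in auto)
  fix z assume "z < d"
  hence "u z \<le> u c" "- u z \<le> - u c" using ub[of z] lb[of z] mx mn by linarith+
  thus "u z = u c" by simp
qed

lemma sum_ind1: "y < (d::nat) \<Longrightarrow> (\<Sum>w<d. f w * (if y = w then 1 else 0)) = (f y::real)"
proof -
  assume y: "y < d"
  have "(\<Sum>w<d. f w * (if y = w then 1 else 0)) = (\<Sum>w\<in>{..<d}. if y = w then f w else 0)" by (intro sum.cong) auto
  also have "\<dots> = f y" using y by (subst sum.delta') auto
  finally show ?thesis .
qed
lemma sum_ind2: "y < (d::nat) \<Longrightarrow> (\<Sum>w<d. f w * (if w = y then 1 else 0)) = (f y::real)"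
proof -
  assume y: "y < d"
  have "(\<Sum>w<d. f w * (if w = y then 1 else 0)) = (\<Sum>w\<in>{..<d}. if w = y then f w else 0)" by (intro sum.cong) auto
  also have "\<dots> = f y" using y by (subst sum.delta) auto
  finally show ?thesis .
qed

lemma mv_entry: "B \<in> carrier_mat r c \<Longrightarrow> u \<in> carrier_vec c \<Longrightarrow> i < r \<Longrightarrow> (B *\<^sub>v u) $ i = (\<Sum>j<c. B $$ (i,j) * u $ j)"
  by (auto simp: scalar_prod_def lessThan_atLeast0 intro!: sum.cong)

lemma stationary_exists:
  fixes K :: "nat \<Rightarrow> nat \<Rightarrow> real" and M :: int
  assumes nonneg: "\<And>x z. x < d \<Longrightarrow> z < d \<Longrightarrow> K x z \<ge> 0"
    and rows: "\<And>x. x < d \<Longrightarrow> (\<Sum>z<d. K x z) = 1"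
    and X0: "X0 \<subseteq> {..<d}" "X0 \<noteq> {}"
    and X0cl: "\<And>x z. x \<in> X0 \<Longrightarrow> z < d \<Longrightarrow> K x z > 0 \<Longrightarrow> z \<in> X0"
    and ND: "ND \<subseteq> {..<d}"
    and intND: "\<And>x z. x < d \<Longrightarrow> z < d \<Longrightarrow> x \<in> ND \<Longrightarrow> real_of_int M * K x z \<in> \<int>"
    and intD: "\<And>x z. x < d \<Longrightarrow> z < d \<Longrightarrow> x \<notin> ND \<Longrightarrow> K x z \<in> \<int>"
  shows "\<exists>C \<psi>. C \<subseteq> X0 \<and> C \<noteq> {} \<and> (\<forall>x<d. 0 \<le> \<psi> x \<and> \<psi> x \<le> 1) \<and> (\<forall>x<d. x \<notin> C \<longrightarrow> \<psi> x = 0)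
     \<and> (\<exists>c\<in>C. \<psi> c > 0) \<and> (\<forall>z<d. (\<Sum>x<d. \<psi> x * K x z) = \<psi> z)
     \<and> (\<forall>x<d. real_of_int M ^ card (C \<inter> ND - {x}) * \<psi> x \<in> \<int>)"
proof -
  define R where "R = edges d K"
  define rs where "rs x = {z. (x,z) \<in> R\<^sup>*}" for x
  have rs_sub: "rs x \<subseteq> {..<d}" if "x < d" for x
  proof
    fix z assume "z \<in> rs x"
    hence "(x,z) \<in> R\<^sup>*" unfolding rs_def by auto
    thus "z \<in> {..<d}" using that by (induction rule: rtrancl_induct) (auto simp: R_def edges_def)
  qed
  have rs_fin: "finite (rs x)" if "x < d" for x using rs_sub[OF that] finite_subset by blast
  have X0_rt: "z \<in> X0" if "(x,z) \<in> R\<^sup>*" "x \<in> X0" for x z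
    using that by (induction rule: rtrancl_induct) (auto simp: R_def edges_def intro: X0cl)
  obtain x1 where x1: "x1 \<in> X0" using X0 by auto
  obtain c0 where c0: "c0 \<in> X0" "\<And>x. x \<in> X0 \<Longrightarrow> card (rs c0) \<le> card (rs x)"
    using ex_has_least_nat[of "\<lambda>x. x \<in> X0" x1 "\<lambda>x. card (rs x)"] x1 by auto
  have c0d: "c0 < d" using c0 X0 by auto
  define C where "C = rs c0"
  have c0C: "c0 \<in> C" unfolding C_def rs_def by auto
  have CX0: "C \<subseteq> X0" unfolding C_def rs_def using X0_rt c0 by auto
  have Cd: "C \<subseteq> {..<d}" using CX0 X0 by auto
  have Ccl: "(x,z) \<in> R\<^sup>* \<Longrightarrow> x \<in> C \<Longrightarrow> z \<in> C" for x z
    unfolding C_def rs_def by auto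
  have Cback: "(x,c0) \<in> R\<^sup>*" if "x \<in> C" for x
  proof -
    have sub: "rs x \<subseteq> C" using Ccl that unfolding rs_def by auto
    have "card (rs c0) \<le> card (rs x)" using c0(2) CX0 that by auto
    hence "rs x = C" using sub card_seteq[OF rs_fin[OF c0d]] unfolding C_def by auto
    thus ?thesis using c0C unfolding rs_def by auto
  qed
  define K' where "K' x z = (if x \<in> C then K x z else if z = c0 then 1 else 0)" for x z
  have nonneg': "K' x z \<ge> 0" if "x < d" "z < d" for x z using nonneg that unfolding K'_def by auto
  have rows': "(\<Sum>z<d. K' x z) = 1" if "x < d" for x
  proof (cases "x \<in> C")
    case True thus ?thesis using rows[OF that] unfolding K'_def by simp
  next
    case False thus ?thesis using c0d unfolding K'_def by simp
  qed
  define R' where "R' = edges d K'"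
  have reach': "(x,c0) \<in> R'\<^sup>*" if "x < d" for x
  proof (cases "x \<in> C")
    case True
    have "\<And>y. (x,y) \<in> R\<^sup>* \<Longrightarrow> (x,y) \<in> R'\<^sup>*"
    proof -
      fix y assume "(x,y) \<in> R\<^sup>*"
      thus "(x,y) \<in> R'\<^sup>*"
      proof (induction rule: rtrancl_induct)
        case base then show ?case by simp
      next
        case (step y z)
        have "y \<in> C" using Ccl step(1) True by blast
        hence "(y,z) \<in> R'" using step(2) unfolding R_def R'_def edges_def K'_def by auto
        then show ?case using step(3) by simp
      qed
    qed
    then show ?thesis using Cback[OF True] by blast
  next
    case False
    hence "(x,c0) \<in> R'" using that c0d unfolding R'_def edges_def K'_def by auto
    thus ?thesis by auto
  qed
  define A where "A = IM d K'"
  have Ac: "A \<in> carrier_mat d d" unfolding A_def by simp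
  define \<psi> where "\<psi> x = det (mat_delete A x x)" for x
  have psi_md: "mat_delete A x x = IM (d-1) (\<lambda>i j. K' (idx x i) (idx x j))" if "x < d" for x
    unfolding A_def using mat_delete_IM[OF that] .
  have psi01: "0 \<le> \<psi> x \<and> \<psi> x \<le> 1" if x: "x < d" for x
  proof -
    have "0 \<le> det (IM (d-1) (\<lambda>i j. K' (idx x i) (idx x j))) \<and> det (IM (d-1) (\<lambda>i j. K' (idx x i) (idx x j))) \<le> 1"
    proof (rule det_IM_substoch)
      fix i j assume "i < d - 1" "j < d - 1"
      thus "0 \<le> K' (idx x i) (idx x j)" using nonneg' idx_lt[OF x] by auto
    next
      fix i assume i: "i < d - 1"
      have "(\<Sum>z<d. K' (idx x i) z) = K' (idx x i) x + (\<Sum>j<d-1. K' (idx x i) (idx x j))"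
        by (rule sum_del[OF x])
      moreover have "K' (idx x i) x \<ge> 0" using nonneg' idx_lt[OF x i] x by auto
      moreover have "(\<Sum>z<d. K' (idx x i) z) = 1" using rows' idx_lt[OF x i] by auto
      ultimately show "(\<Sum>j<d-1. K' (idx x i) (idx x j)) \<le> 1" by linarith
    qed
    thus ?thesis unfolding \<psi>_def psi_md[OF x] .
  qed
  have Aent: "A $$ (i,j) = (if i = j then 1 else 0) - K' i j" if "i < d" "j < d" for i j
    unfolding A_def using that by simp
  have detA: "det A = 0"
  proof -
    have "A *\<^sub>v vec d (\<lambda>_. 1) = 0\<^sub>v d"
    proof (rule eq_vecI)
      fix i assume "i < dim_vec (0\<^sub>v d :: real vec)"
      hence i: "i < d" by simp
      have "(A *\<^sub>v vec d (\<lambda>_. 1)) $ i = (\<Sum>j<d. A $$ (i,j))"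
        using Ac i by (auto simp: scalar_prod_def lessThan_atLeast0)
      also have "\<dots> = (\<Sum>j<d. (if i = j then 1 else 0) - K' i j)" using Aent i by auto
      also have "\<dots> = 0" using rows'[OF i] i by (simp add: sum_subtractf)
      finally show "(A *\<^sub>v vec d (\<lambda>_. 1)) $ i = 0\<^sub>v d $ i" using i by simp
    qed (use Ac in auto)
    moreover have "vec d (\<lambda>_. 1) \<noteq> (0\<^sub>v d :: real vec)"
    proof
      assume "vec d (\<lambda>_. 1) = (0\<^sub>v d :: real vec)"
      hence "vec d (\<lambda>_. 1) $ c0 = (0\<^sub>v d :: real vec) $ c0" by simp
      thus False using c0d by simp
    qed
    ultimately show ?thesis using det_0_iff_vec_prod_zero_field[OF Ac] vec_carrier[of d "\<lambda>_. 1::real"] by blast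
  qed
  have cof_const: "cofactor A x z = cofactor A x x" if x: "x < d" and z: "z < d" for x z
  proof -
    define g where "g y = cofactor A x y" for y
    have AA: "A * adj_mat A = det A \<cdot>\<^sub>m 1\<^sub>m d" using adj_mat[OF Ac] by simp
    have adjc: "adj_mat A \<in> carrier_mat d d" using adj_mat[OF Ac] by simp
    have harm: "g y = (\<Sum>w<d. K' y w * g w)" if y: "y < d" for y
    proof -
      have "(A * adj_mat A) $$ (y,x) = 0" using AA detA y x by simp
      moreover have "(A * adj_mat A) $$ (y,x) = (\<Sum>w<d. A $$ (y,w) * adj_mat A $$ (w,x))"
        using Ac adjc y x by (auto simp: scalar_prod_def lessThan_atLeast0)
      moreover have "adj_mat A $$ (w,x) = g w" if "w < d" for w
        using that x Ac unfolding adj_mat_def g_def by auto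
      ultimately have "(\<Sum>w<d. A $$ (y,w) * g w) = 0" by simp
      moreover have "(\<Sum>w<d. ((if y = w then 1 else 0) - K' y w) * g w) = (\<Sum>w<d. A $$ (y,w) * g w)"
        using Aent y by (intro sum.cong) auto
      ultimately have "(\<Sum>w<d. ((if y = w then 1 else 0) - K' y w) * g w) = 0" by simp
      moreover have "(\<Sum>w<d. ((if y = w then 1 else 0) - K' y w) * g w) = (\<Sum>w<d. g w * (if y = w then 1 else 0)) - (\<Sum>w<d. K' y w * g w)"
        by (subst sum_subtractf[symmetric], rule sum.cong, simp, simp add: algebra_simps)
      ultimately show ?thesis using y sum_ind1[OF y, of g] by linarith
    qed
    have "g z = g c0"
      by (rule harmonic_const[OF nonneg' rows' harm _ c0d z]) (use reach' R'_def in auto)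
    moreover have "g x = g c0"
      by (rule harmonic_const[OF nonneg' rows' harm _ c0d x]) (use reach' R'_def in auto)
    ultimately show ?thesis unfolding g_def by simp
  qed
  have psi_cof: "\<psi> x = cofactor A x x" for x unfolding \<psi>_def cofactor_def by simp
  have stat': "(\<Sum>x<d. \<psi> x * K' x z) = \<psi> z" if z: "z < d" for z
  proof -
    have "(\<Sum>x<d. \<psi> x * A $$ (x,z)) = (\<Sum>x<d. A $$ (x,z) * cofactor A x z)"
    proof (rule sum.cong[OF refl])
      fix x assume "x \<in> {..<d}"
      hence "cofactor A x z = cofactor A x x" using cof_const[of x z] z by simp
      hence "\<psi> x = cofactor A x z" using psi_cof[of x] by linarith
      thus "\<psi> x * A $$ (x,z) = A $$ (x,z) * cofactor A x z" by simp
    qed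
    also have "\<dots> = det A" using laplace_expansion_column[OF Ac z] by simp
    finally have "(\<Sum>x<d. \<psi> x * A $$ (x,z)) = 0" using detA by simp
    moreover have "(\<Sum>x<d. \<psi> x * ((if x = z then 1 else 0) - K' x z)) = (\<Sum>x<d. \<psi> x * A $$ (x,z))"
      using Aent z by (intro sum.cong) auto
    ultimately have "(\<Sum>x<d. \<psi> x * ((if x = z then 1 else 0) - K' x z)) = 0" by simp
    moreover have "(\<Sum>x<d. \<psi> x * ((if x = z then 1 else 0) - K' x z)) = (\<Sum>x<d. \<psi> x * (if x = z then 1 else 0)) - (\<Sum>x<d. \<psi> x * K' x z)"
      by (subst sum_subtractf[symmetric], rule sum.cong, simp, simp add: algebra_simps)
    ultimately show ?thesis using z sum_ind2[OF z, of \<psi>] by linarith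
  qed
  have psi_c0: "\<psi> c0 > 0"
  proof -
    let ?B = "mat_delete A c0 c0"
    have Bc: "?B \<in> carrier_mat (d-1) (d-1)" using mat_delete_carrier[OF Ac] .
    have "det ?B \<noteq> 0"
    proof
      assume "det ?B = 0"
      then obtain u where u: "u \<in> carrier_vec (d-1)" "u \<noteq> 0\<^sub>v (d-1)" "?B *\<^sub>v u = 0\<^sub>v (d-1)"
        using det_0_iff_vec_prod_zero_field[OF Bc] by auto
      define invi where "invi y = (if y < c0 then y else y - 1)" for y
      define uh where "uh y = (if y = c0 then 0 else u $ invi y)" for y
      have uh_idx: "uh (idx c0 i) = u $ i" for i unfolding uh_def invi_def idx_def by auto
      have idx_inv: "idx c0 (invi y) = y" "invi y < d - 1" if "y < d" "y \<noteq> c0" for y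
        using that c0d unfolding idx_def invi_def by auto
      have harm: "uh y = (\<Sum>z<d. K' y z * uh z)" if y: "y < d" "y \<noteq> c0" for y
      proof -
        let ?i = "invi y"
        have i: "?i < d - 1" using idx_inv[OF y] by simp
        have "(?B *\<^sub>v u) $ ?i = 0" using u(3) i by simp
        moreover have "(?B *\<^sub>v u) $ ?i = (\<Sum>j<d-1. ?B $$ (?i,j) * u $ j)"
          using mv_entry[OF Bc u(1) i] .
        moreover have "?B $$ (?i,j) = (if ?i = j then 1 else 0) - K' y (idx c0 j)" if "j < d - 1" for j
        proof -
          have eqv: "(invi y = j) \<longleftrightarrow> (y = idx c0 j)" using idx_inv(1)[OF y] idx_inj by metis
          show ?thesis
            using mat_delete_idx[OF Ac i that, of c0] Aent[OF idx_lt[OF c0d i] idx_lt[OF c0d that]] idx_inv[OF y]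
            by (simp add: eqv)
        qed
        ultimately have h: "(\<Sum>j<d-1. ((if ?i = j then 1 else 0) - K' y (idx c0 j)) * u $ j) = 0"
          by (metis (no_types, lifting) lessThan_iff sum.cong)
        have e1: "u $ ?i = (\<Sum>j<d-1. K' y (idx c0 j) * u $ j)"
        proof -
          have "(\<Sum>j<d-1. ((if ?i = j then 1 else 0) - K' y (idx c0 j)) * u $ j) = (\<Sum>j<d-1. (\<lambda>j. u $ j) j * (if ?i = j then 1 else 0)) - (\<Sum>j<d-1. K' y (idx c0 j) * u $ j)"
            by (subst sum_subtractf[symmetric], rule sum.cong, simp, simp add: algebra_simps)
          thus ?thesis using h sum_ind1[OF i, of "\<lambda>j. u $ j"] by linarith
        qed
        have "(\<Sum>z<d. K' y z * uh z) = K' y c0 * uh c0 + (\<Sum>j<d-1. K' y (idx c0 j) * uh (idx c0 j))"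
          by (rule sum_del[OF c0d])
        also have "\<dots> = (\<Sum>j<d-1. K' y (idx c0 j) * u $ j)" unfolding uh_idx by (simp add: uh_def)
        finally show ?thesis using e1 idx_inv[OF y] uh_idx[of ?i] by simp
      qed
      have "uh z = uh c0" if "z < d" for z
        by (rule harmonic_const[OF nonneg' rows' harm _ c0d that]) (use reach' R'_def in auto)
      hence "u $ i = 0" if "i < d - 1" for i using uh_idx[of i] idx_lt[OF c0d that] by (simp add: uh_def)
      hence "u = 0\<^sub>v (d-1)" using u(1) by (intro eq_vecI) auto
      thus False using u(2) by simp
    qed
    thus ?thesis using psi01[OF c0d] unfolding \<psi>_def by simp
  qed
  have KC1: "(\<Sum>z\<in>C. K' x z) = 1" if x: "x < d" for x
  proof (cases "x \<in> C")
    case True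
    have "(\<Sum>z<d. K' x z) = (\<Sum>z\<in>C. K' x z) + (\<Sum>z\<in>{..<d}-C. K' x z)"
      using sum.subset_diff[OF Cd finite_lessThan] by (simp add: add.commute)
    moreover have "K' x z = 0" if "z \<in> {..<d} - C" for z
    proof (rule ccontr)
      assume "K' x z \<noteq> 0"
      hence "K x z > 0" using nonneg[OF x] that True unfolding K'_def by force
      hence "(x,z) \<in> R" using x that unfolding R_def edges_def by auto
      hence "z \<in> C" using Ccl True by blast
      thus False using that by auto
    qed
    ultimately show ?thesis using rows'[OF x] by simp
  next
    case False
    thus ?thesis using c0C Cd unfolding K'_def by (simp add: sum.delta[OF finite_subset[OF Cd]])
  qed
  have sumC: "(\<Sum>z\<in>C. \<psi> z) = (\<Sum>x<d. \<psi> x)"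
  proof -
    have "(\<Sum>z\<in>C. \<psi> z) = (\<Sum>z\<in>C. \<Sum>x<d. \<psi> x * K' x z)" using stat' Cd by (intro sum.cong) auto
    also have "\<dots> = (\<Sum>x<d. \<Sum>z\<in>C. \<psi> x * K' x z)" by (rule sum.swap)
    also have "\<dots> = (\<Sum>x<d. \<psi> x * (\<Sum>z\<in>C. K' x z))" by (simp add: sum_distrib_left)
    also have "\<dots> = (\<Sum>x<d. \<psi> x)" using KC1 by simp
    finally show ?thesis .
  qed
  have zeroC: "\<psi> x = 0" if x: "x < d" "x \<notin> C" for x
  proof -
    have "(\<Sum>x<d. \<psi> x) = (\<Sum>z\<in>C. \<psi> z) + (\<Sum>z\<in>{..<d}-C. \<psi> z)"
      using sum.subset_diff[OF Cd finite_lessThan] by (simp add: add.commute)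
    hence s0: "(\<Sum>z\<in>{..<d}-C. \<psi> z) = 0" using sumC by simp
    have "\<forall>z\<in>{..<d}-C. \<psi> z = 0" using iffD1[OF sum_nonneg_eq_0_iff s0] psi01 by auto
    thus ?thesis using x by auto
  qed
  have stat: "(\<Sum>x<d. \<psi> x * K x z) = \<psi> z" if z: "z < d" for z
  proof -
    have "(\<Sum>x<d. \<psi> x * K x z) = (\<Sum>x<d. \<psi> x * K' x z)"
      using zeroC by (intro sum.cong) (auto simp: K'_def)
    thus ?thesis using stat'[OF z] by simp
  qed
  have intg: "real_of_int M ^ card (C \<inter> ND - {x}) * \<psi> x \<in> \<int>" if x: "x < d" for x
  proof -
    define S where "S = {i. i < d - 1 \<and> idx x i \<in> C \<inter> ND}"
    have cS: "card S = card (C \<inter> ND - {x})" unfolding S_def using card_del[OF x, of "C \<inter> ND"] Cd by auto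
    have "real_of_int M ^ card S * det (IM (d-1) (\<lambda>i j. K' (idx x i) (idx x j))) \<in> \<int>"
    proof (rule det_Ints)
      fix i j assume ij: "i < d - 1" "j < d - 1" "i \<in> S"
      hence "idx x i \<in> C" "idx x i \<in> ND" "idx x i < d" "idx x j < d" unfolding S_def using idx_lt[OF x] by auto
      hence "real_of_int M * K' (idx x i) (idx x j) \<in> \<int>" using intND unfolding K'_def by auto
      thus "real_of_int M * IM (d - 1) (\<lambda>i j. K' (idx x i) (idx x j)) $$ (i, j) \<in> \<int>"
        using ij by (auto simp: right_diff_distrib)
    next
      fix i j assume ij: "i < d - 1" "j < d - 1" "i \<notin> S"
      have "K' (idx x i) (idx x j) \<in> \<int>"
      proof (cases "idx x i \<in> C")
        case True
        hence "idx x i \<notin> ND" using ij unfolding S_def by auto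
        thus ?thesis using True intD idx_lt[OF x] ij unfolding K'_def by auto
      next
        case False thus ?thesis unfolding K'_def by auto
      qed
      thus "IM (d - 1) (\<lambda>i j. K' (idx x i) (idx x j)) $$ (i, j) \<in> \<int>" using ij by auto
    qed (auto simp: S_def)
    thus ?thesis unfolding \<psi>_def psi_md[OF x] cS .
  qed
  show ?thesis
    apply (rule exI[of _ C], rule exI[of _ \<psi>])
    using CX0 c0C psi01 zeroC psi_c0 stat intg by auto
qed

definition pv :: "nat \<Rightarrow> (nat \<Rightarrow> nat \<Rightarrow> real) \<Rightarrow> nat \<Rightarrow> (nat \<Rightarrow> real) \<Rightarrow> real" where
  "pv n P h x = (\<Sum>l<n. P h l * x l)"

definition phi :: "nat \<Rightarrow> (nat \<Rightarrow> nat \<Rightarrow> real) \<Rightarrow> (nat \<Rightarrow> (real \<times> nat) set) \<Rightarrow> (nat \<Rightarrow> real) \<Rightarrow> nat \<Rightarrow> real" where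
  "phi n P Act x j = Min ((\<lambda>(c,h). c + pv n P h x) ` Act j)"

definition nd :: "nat \<Rightarrow> (nat \<Rightarrow> nat \<Rightarrow> real) \<Rightarrow> nat \<Rightarrow> bool" where
  "nd n P h \<longleftrightarrow> (\<exists>l l'. l < n \<and> l' < n \<and> l \<noteq> l' \<and> P h l > 0 \<and> P h l' > 0)"

locale mdp =
  fixes n q :: nat and Act :: "nat \<Rightarrow> (real \<times> nat) set" and P :: "nat \<Rightarrow> nat \<Rightarrow> real"
    and M \<beta> :: real
  assumes n: "n \<ge> 1"
    and Act_fin: "\<And>j. j < n \<Longrightarrow> finite (Act j)"
    and Act_ne: "\<And>j. j < n \<Longrightarrow> Act j \<noteq> {}"
    and Act_q: "\<And>j c h. j < n \<Longrightarrow> (c,h) \<in> Act j \<Longrightarrow> h < q"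
    and Act_b: "\<And>j c h. j < n \<Longrightarrow> (c,h) \<in> Act j \<Longrightarrow> \<bar>c\<bar> \<le> \<beta>"
    and Pnn: "\<And>h l. h < q \<Longrightarrow> l < n \<Longrightarrow> P h l \<ge> 0"
    and Pst: "\<And>h. h < q \<Longrightarrow> (\<Sum>l<n. P h l) = 1"
    and Pmin: "\<And>h l. h < q \<Longrightarrow> l < n \<Longrightarrow> P h l > 0 \<Longrightarrow> P h l \<ge> 1 / M"
    and M1: "M \<ge> 1"
begin

abbreviation "Phi \<equiv> phi n P Act"

lemma beta_nn: "\<beta> \<ge> 0"
proof -
  obtain a where "a \<in> Act 0" using Act_ne[of 0] n by auto
  thus ?thesis using Act_b[of 0 "fst a" "snd a"] n by auto
qed

lemma det_row: assumes h: "h < q" "\<not> nd n P h" and l: "l < n" "P h l > 0" shows "P h l = 1"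
proof -
  have z: "P h l' = 0" if "l' < n" "l' \<noteq> l" for l'
    using h Pnn[OF h(1) that(1)] that l unfolding nd_def by force
  have "(\<Sum>l'<n. P h l') = P h l" using l z by (subst sum.remove[of _ l]) (auto intro!: sum.neutral)
  thus ?thesis using Pst[OF h(1)] by simp
qed

lemma pv_mono: assumes "h < q" "\<And>l. l < n \<Longrightarrow> x l \<le> y l" shows "pv n P h x \<le> pv n P h y"
  unfolding pv_def using assms Pnn by (intro sum_mono mult_left_mono) auto

lemma pv_shift: assumes "h < q" shows "pv n P h (\<lambda>l. x l + t) = pv n P h x + t"
  unfolding pv_def using Pst[OF assms] by (simp add: distrib_left sum.distrib sum_distrib_right[symmetric])

lemma Phi_le: assumes "j < n" "(c,h) \<in> Act j" shows "Phi x j \<le> c + pv n P h x"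
  unfolding phi_def using assms Act_fin by (intro Min_le) force+

lemma Phi_ge: assumes "j < n" "\<And>c h. (c,h) \<in> Act j \<Longrightarrow> t \<le> c + pv n P h x" shows "t \<le> Phi x j"
  unfolding phi_def using assms Act_fin Act_ne by (intro Min.boundedI) auto

lemma Phi_attained: assumes "j < n" shows "\<exists>c h. (c,h) \<in> Act j \<and> Phi x j = c + pv n P h x"
proof -
  have "Phi x j \<in> (\<lambda>(c,h). c + pv n P h x) ` Act j" unfolding phi_def
    using assms Act_fin Act_ne by (intro Min_in) auto
  thus ?thesis by auto
qed

lemma Phi_mono: assumes "j < n" "\<And>l. l < n \<Longrightarrow> x l \<le> y l" shows "Phi x j \<le> Phi y j"
proof (rule Phi_ge[OF assms(1)])
  fix c h assume a: "(c,h) \<in> Act j"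
  have "Phi x j \<le> c + pv n P h x" by (rule Phi_le[OF assms(1) a])
  also have "\<dots> \<le> c + pv n P h y" using pv_mono[OF Act_q[OF assms(1) a] assms(2)] by simp
  finally show "Phi x j \<le> c + pv n P h y" .
qed

lemma Phi_shift: assumes j: "j < n" shows "Phi (\<lambda>l. x l + t) j = Phi x j + t"
proof (rule antisym)
  obtain c h where a: "(c,h) \<in> Act j" "Phi x j = c + pv n P h x" using Phi_attained[OF j] by blast
  have "Phi (\<lambda>l. x l + t) j \<le> c + pv n P h (\<lambda>l. x l + t)" by (rule Phi_le[OF j a(1)])
  also have "\<dots> = Phi x j + t" using a pv_shift[OF Act_q[OF j a(1)]] by simp
  finally show "Phi (\<lambda>l. x l + t) j \<le> Phi x j + t" .
next
  show "Phi x j + t \<le> Phi (\<lambda>l. x l + t) j"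
  proof (rule Phi_ge[OF j])
    fix c h assume a: "(c,h) \<in> Act j"
    have "Phi x j \<le> c + pv n P h x" by (rule Phi_le[OF j a])
    thus "Phi x j + t \<le> c + pv n P h (\<lambda>l. x l + t)" using pv_shift[OF Act_q[OF j a]] by simp
  qed
qed

lemma span_main:
  assumes fixp: "\<And>j. j < n \<Longrightarrow> Phi v j = v j"
  shows "\<exists>w. \<forall>j<n. w j \<le> Phi w j \<and> w j \<le> 0 \<and>
     - (real (n - 1) * \<beta> * M ^ min (card {h. h < q \<and> nd n P h}) (n - 1)) \<le> w j"
proof -
  define mxv where "mxv = Max (v ` {..<n})"
  have finv: "finite (v ` {..<n})" "v ` {..<n} \<noteq> {}" using n by (auto simp: lessThan_empty_iff)
  obtain jm where jm: "jm < n" "v jm = mxv" using Max_in[OF finv] unfolding mxv_def by auto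
  have vle: "v j \<le> mxv" if "j < n" for j unfolding mxv_def using finv that by auto
  define v0 where "v0 j = v j - mxv" for j
  define Sub where "Sub = {w. \<forall>j<n. w j \<le> Phi w j \<and> w j \<le> 0 \<and> v0 j \<le> w j}"
  have v0Sub: "v0 \<in> Sub"
  proof -
    have "Phi v0 j = v0 j" if "j < n" for j
      using Phi_shift[OF that, of v "- mxv"] fixp[OF that] unfolding v0_def by simp
    thus ?thesis unfolding Sub_def v0_def using vle by auto
  qed
  define ws where "ws j = (if j < n then Sup ((\<lambda>w. w j) ` Sub) else 0)" for j
  have bdd: "bdd_above ((\<lambda>w. w j) ` Sub)" if "j < n" for j
    using that unfolding Sub_def by (intro bdd_aboveI[of _ 0]) auto
  have ne: "(\<lambda>w. w j) ` Sub \<noteq> {}" for j using v0Sub by auto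
  have ws_ge: "w j \<le> ws j" if "w \<in> Sub" "j < n" for w j
    unfolding ws_def using that bdd by (auto intro: cSup_upper)
  have ws_le0: "ws j \<le> 0" if "j < n" for j
    unfolding ws_def using that ne by (auto intro!: cSup_least simp: Sub_def)
  have wsSub: "ws \<in> Sub"
  proof -
    have "ws j \<le> Phi ws j" if j: "j < n" for j
    proof -
      have "w j \<le> Phi ws j" if w: "w \<in> Sub" for w
      proof -
        have "w j \<le> Phi w j" using w j unfolding Sub_def by auto
        also have "\<dots> \<le> Phi ws j" using Phi_mono[OF j] ws_ge[OF w] by auto
        finally show ?thesis .
      qed
      thus ?thesis unfolding ws_def using j ne by (auto intro!: cSup_least)
    qed
    moreover have "v0 j \<le> ws j" if "j < n" for j using ws_ge[OF v0Sub that] .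
    ultimately show ?thesis unfolding Sub_def using ws_le0 by auto
  qed
  define X0 where "X0 = {j. j < n \<and> ws j = 0}"
  have jmX0: "jm \<in> X0"
  proof -
    have "v0 jm = 0" unfolding v0_def using jm by simp
    thus ?thesis unfolding X0_def using ws_ge[OF v0Sub jm(1)] ws_le0[OF jm(1)] jm(1) by auto
  qed
  define tight where "tight j c h \<longleftrightarrow> c + pv n P h ws = ws j" for j c h
  define reaches where "reaches h S \<longleftrightarrow> (\<exists>l<n. l \<in> S \<and> P h l > 0)" for h S
  have act_ge: "ws j \<le> c + pv n P h ws" if "j < n" "(c,h) \<in> Act j" for j c h
    using wsSub Phi_le[OF that, of ws] that unfolding Sub_def by fastforce
  have escape: "\<exists>j\<in>R. \<exists>c h. (c,h) \<in> Act j \<and> tight j c h \<and> reaches h ({..<n} - R)"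
    if R: "R \<subseteq> {..<n}" "R \<noteq> {}" "R \<inter> X0 = {}" for R
  proof (rule ccontr)
    assume nesc: "\<not> ?thesis"
    have finR: "finite R" using R finite_subset by blast
    have wsneg: "ws j < 0" if "j \<in> R" for j
      using ws_le0[of j] that R unfolding X0_def by force
    define SL where "SL = (\<Union>j\<in>R. (\<lambda>(c,h). c + pv n P h ws - ws j) ` {a \<in> Act j. \<not> tight j (fst a) (snd a)})"
    have finSL: "finite SL" unfolding SL_def using finR R Act_fin by auto
    have SLpos: "s > 0" if "s \<in> SL" for s
      using that act_ge R unfolding SL_def tight_def by (force simp: less_le)
    define E1 where "E1 = (\<lambda>j. - ws j) ` R"
    have E1pos: "s > 0" if "s \<in> E1" for s using that wsneg unfolding E1_def by auto
    define \<epsilon> where "\<epsilon> = Min (E1 \<union> SL)"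
    have finE: "finite (E1 \<union> SL)" "E1 \<union> SL \<noteq> {}" using finSL finR R unfolding E1_def by auto
    have epos: "\<epsilon> > 0" unfolding \<epsilon>_def using Min_in[OF finE] E1pos SLpos by auto
    have eE1: "\<epsilon> \<le> - ws j" if "j \<in> R" for j unfolding \<epsilon>_def using finE that E1_def by auto
    have eSL: "\<epsilon> \<le> s" if "s \<in> SL" for s unfolding \<epsilon>_def using finE that by auto
    define w' where "w' l = (if l \<in> R then ws l + \<epsilon> else ws l)" for l
    have w'ge: "ws l \<le> w' l" for l unfolding w'_def using epos by auto
    have pvw': "pv n P h w' = pv n P h ws + \<epsilon> * (\<Sum>l<n. if l \<in> R then P h l else 0)" for h
      unfolding pv_def w'_def sum_distrib_left sum.distrib[symmetric] by (intro sum.cong) (auto simp: algebra_simps)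
    have w'Sub: "w' \<in> Sub"
    proof -
      have "w' j \<le> Phi w' j" if j: "j < n" for j
      proof (cases "j \<in> R")
        case False
        have "w' j = ws j" using False unfolding w'_def by simp
        also have "\<dots> \<le> Phi ws j" using wsSub j unfolding Sub_def by auto
        also have "\<dots> \<le> Phi w' j" using Phi_mono[OF j] w'ge by auto
        finally show ?thesis .
      next
        case True
        show ?thesis
        proof (rule Phi_ge[OF j])
          fix c h assume a: "(c,h) \<in> Act j"
          have hq: "h < q" using Act_q[OF j a] .
          have s0: "(\<Sum>l<n. if l \<in> R then P h l else 0) \<ge> 0" using Pnn[OF hq] by (intro sum_nonneg) auto
          show "w' j \<le> c + pv n P h w'"
          proof (cases "tight j c h")
            case True
            have nr: "\<not> reaches h ({..<n} - R)" using nesc True a \<open>j \<in> R\<close> by blast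
            have "(\<Sum>l<n. if l \<in> R then P h l else 0) = (\<Sum>l<n. P h l)"
            proof (intro sum.cong refl)
              fix l assume "l \<in> {..<n}"
              thus "(if l \<in> R then P h l else 0) = P h l" using nr Pnn[OF hq, of l] unfolding reaches_def by auto
            qed
            hence "(\<Sum>l<n. if l \<in> R then P h l else 0) = 1" using Pst[OF hq] by simp
            thus ?thesis using True \<open>j \<in> R\<close> unfolding pvw' tight_def w'_def by simp
          next
            case False
            have "c + pv n P h ws - ws j \<in> SL" unfolding SL_def using False a \<open>j \<in> R\<close> by force
            hence "\<epsilon> \<le> c + pv n P h ws - ws j" using eSL by blast
            moreover have "\<epsilon> * (\<Sum>l<n. if l \<in> R then P h l else 0) \<ge> 0" using epos s0 by simp
            ultimately show ?thesis using \<open>j \<in> R\<close> unfolding pvw' w'_def by simp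
          qed
        qed
      qed
      moreover have "w' j \<le> 0" if "j < n" for j
        using ws_le0[OF that] eE1[of j] unfolding w'_def by auto
      moreover have "v0 j \<le> w' j" if "j < n" for j using ws_ge[OF v0Sub that] w'ge[of j] by simp
      ultimately show ?thesis unfolding Sub_def by auto
    qed
    obtain j where j: "j \<in> R" using R by auto
    have "w' j \<le> ws j" using ws_ge[OF w'Sub] j R by auto
    thus False using j epos unfolding w'_def by simp
  qed
  define G where "G S = S \<union> {j. j < n \<and> (\<exists>c h. (c,h) \<in> Act j \<and> tight j c h \<and> reaches h S)}" for S
  define L where "L t = (G ^^ t) X0" for t
  have L0: "L 0 = X0" unfolding L_def by simp
  have LS: "L (Suc t) = G (L t)" for t unfolding L_def by simp
  have X0n: "X0 \<subseteq> {..<n}" unfolding X0_def by auto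
  have Ln: "L t \<subseteq> {..<n}" for t
    by (induction t) (use X0n in \<open>auto simp: L0 LS G_def\<close>)
  have Lmono1: "L t \<subseteq> L (Suc t)" for t unfolding LS G_def by auto
  have Lmono: "L t \<subseteq> L s" if "t \<le> s" for t s
    using lift_Suc_mono_le[of L, OF Lmono1 that] .
  have finL: "finite (L t)" for t using Ln finite_subset by blast
  have card_L: "min n (Suc t) \<le> card (L t)" for t
  proof (induction t)
    case 0
    have "card X0 \<ge> 1" using jmX0 finite_subset[OF X0n] by (metis One_nat_def Suc_leI card_gt_0_iff empty_iff finite_lessThan)
    then show ?case unfolding L0 by simp
  next
    case (Suc t)
    show ?case
    proof (cases "L t = {..<n}")
      case True
      hence "L (Suc t) = {..<n}" using Lmono1[of t] Ln[of "Suc t"] by auto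
      thus ?thesis by simp
    next
      case False
      define R where "R = {..<n} - L t"
      have R: "R \<subseteq> {..<n}" "R \<noteq> {}" "R \<inter> X0 = {}" unfolding R_def using False Ln[of t] Lmono[of 0 t] L0 by auto
      obtain j c h where j: "j \<in> R" "(c,h) \<in> Act j" "tight j c h" "reaches h ({..<n} - R)"
        using escape[OF R] by blast
      have "{..<n} - R = L t" unfolding R_def using Ln[of t] by auto
      hence "j \<in> L (Suc t)" "j \<notin> L t" using j R unfolding LS G_def R_def by auto
      hence "L t \<subset> L (Suc t)" using Lmono1[of t] by auto
      hence "card (L t) < card (L (Suc t))" using finL by (intro psubset_card_mono) auto
      thus ?thesis using Suc.IH by simp
    qed
  qed
  have Lall: "L (n - 1) = {..<n}"
  proof -
    have "n \<le> card (L (n-1))" using card_L[of "n-1"] n by simp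
    thus ?thesis using Ln[of "n-1"] by (metis card_lessThan card_seteq finite_lessThan)
  qed
  define ND where "ND = {h. h < q \<and> nd n P h}"
  define fr where "fr t = {h. h < q \<and> reaches h (L t) \<and> (\<forall>s<t. \<not> reaches h (L s))}" for t
  define E where "E t = {s. s < t \<and> fr s \<inter> ND \<noteq> {}}" for t
  have reach_mono: "reaches h S'" if "reaches h S" "S \<subseteq> S'" for h S S'
    using that unfolding reaches_def by auto
  have fr_disj: "h \<notin> fr t" if "s \<noteq> t" "h \<in> fr s" for h s t
  proof
    assume "h \<in> fr t"
    show False
    proof (cases "s < t")
      case True thus False using \<open>h \<in> fr t\<close> that unfolding fr_def by auto
    next
      case False hence "t < s" using that by simp
      thus False using \<open>h \<in> fr t\<close> that unfolding fr_def by auto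
    qed
  qed
  have finND: "finite ND" unfolding ND_def by auto
  have Ecard: "card (E t) \<le> min (card ND) t" for t
  proof -
    have "E t \<subseteq> {..<t}" unfolding E_def by auto
    hence c1: "card (E t) \<le> t" using card_mono[of "{..<t}" "E t"] by simp
    define f where "f s = (SOME h. h \<in> fr s \<inter> ND)" for s
    have fE: "f s \<in> fr s \<inter> ND" if sE: "s \<in> E t" for s
    proof -
      obtain x where "x \<in> fr s \<inter> ND" using sE unfolding E_def by blast
      thus ?thesis unfolding f_def by (rule someI)
    qed
    have "inj_on f (E t)"
    proof (rule inj_onI)
      fix s s'
      assume ss: "s \<in> E t" "s' \<in> E t" "f s = f s'"
      have "f s \<in> fr s" "f s \<in> fr s'" using fE[OF ss(1)] fE[OF ss(2)] ss(3) by auto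
      thus "s = s'" using fr_disj by blast
    qed
    moreover have "f ` E t \<subseteq> ND" using fE by auto
    ultimately have "card (E t) \<le> card ND" using card_inj_on_le finND by blast
    thus ?thesis using c1 by simp
  qed
  have Emono: "card (E t) \<le> card (E (Suc t))" for t
    by (rule card_mono) (auto simp: E_def)
  define \<mu> where "\<mu> = Min (ws ` {..<n})"
  have finws: "finite (ws ` {..<n})" "ws ` {..<n} \<noteq> {}" using n by (auto simp: lessThan_empty_iff)
  obtain j\<mu> where j\<mu>: "j\<mu> < n" "ws j\<mu> = \<mu>" using Min_in[OF finws] unfolding \<mu>_def by auto
  have mule: "\<mu> \<le> ws j" if "j < n" for j unfolding \<mu>_def using finws that by auto
  have mu0: "\<mu> \<le> 0" using mule[OF jm(1)] jmX0 unfolding X0_def by auto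
  define D where "D = - \<mu>"
  have D0: "D \<ge> 0" unfolding D_def using mu0 by simp
  have pv_lower: "pv n P h ws \<ge> \<mu> + P h l * (ws l - \<mu>)" if hl: "h < q" "l < n" for h l
  proof -
    have "pv n P h ws = \<mu> * (\<Sum>l<n. P h l) + (\<Sum>l'<n. P h l' * (ws l' - \<mu>))"
      unfolding pv_def by (simp add: sum_distrib_left sum.distrib[symmetric] algebra_simps)
    also have "\<dots> = \<mu> + (\<Sum>l'<n. P h l' * (ws l' - \<mu>))" using Pst[OF hl(1)] by simp
    finally have e: "pv n P h ws = \<mu> + (\<Sum>l'<n. P h l' * (ws l' - \<mu>))" .
    have "(\<Sum>l'<n. P h l' * (ws l' - \<mu>)) \<ge> P h l * (ws l - \<mu>)"
      using hl Pnn[OF hl(1)] mule by (intro member_le_sum) (auto intro!: mult_nonneg_nonneg)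
    thus ?thesis using e by simp
  qed
  have Mpos: "M > 0" using M1 by simp
  have dpm: "D / M ^ e' \<le> D / M ^ e" if "e \<le> e'" for e e'
    using D0 M1 that by (intro divide_left_mono power_increasing mult_pos_pos) (auto intro: zero_less_power)
  have main: "\<forall>j\<in>L t. D / M ^ card (E t) - real t * \<beta> \<le> ws j - \<mu>" for t
  proof (induction t)
    case 0
    show ?case unfolding L0 X0_def D_def E_def by auto
  next
    case (Suc t)
    show ?case
    proof
      fix j assume jS: "j \<in> L (Suc t)"
      show "D / M ^ card (E (Suc t)) - real (Suc t) * \<beta> \<le> ws j - \<mu>"
      proof (cases "j \<in> L t")
        case True
        have "D / M ^ card (E (Suc t)) \<le> D / M ^ card (E t)" using dpm Emono by blast
        moreover have "D / M ^ card (E t) - real t * \<beta> \<le> ws j - \<mu>" using Suc.IH True by blast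
        ultimately show ?thesis using beta_nn by (simp add: algebra_simps)
      next
        case False
        then obtain c h where a: "j < n" "(c,h) \<in> Act j" "tight j c h" "reaches h (L t)"
          using jS unfolding LS G_def by auto
        have hq: "h < q" using Act_q[OF a(1,2)] .
        obtain l where l: "l < n" "l \<in> L t" "P h l > 0" using a(4) unfolding reaches_def by auto
        have hfr: "h \<in> fr t"
        proof -
          have "\<not> reaches h (L s)" if "s < t" for s
          proof
            assume "reaches h (L s)"
            hence "j \<in> L (Suc s)" using a unfolding LS G_def by auto
            moreover have "L (Suc s) \<subseteq> L t" using Lmono that by simp
            ultimately show False using False by auto
          qed
          thus ?thesis unfolding fr_def using hq a(4) by auto
        qed
        have dl: "D / M ^ card (E t) - real t * \<beta> \<le> ws l - \<mu>" using Suc.IH l(2) by auto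
        have wj: "ws j - \<mu> \<ge> - \<beta> + P h l * (ws l - \<mu>)"
        proof -
          have "ws j = c + pv n P h ws" using a(3) unfolding tight_def by simp
          moreover have "c \<ge> - \<beta>" using Act_b[OF a(1,2)] by simp
          ultimately show ?thesis using pv_lower[OF hq l(1)] by simp
        qed
        have p1: "P h l \<le> 1"
        proof -
          have "P h l \<le> (\<Sum>l<n. P h l)" using l(1) Pnn[OF hq] by (intro member_le_sum) auto
          thus ?thesis using Pst[OF hq] by simp
        qed
        show ?thesis
        proof (cases "nd n P h")
          case True
          have "t \<in> E (Suc t)" "t \<notin> E t" using hfr True hq unfolding E_def ND_def by auto
          moreover have "E (Suc t) = insert t (E t)" using \<open>t \<in> E (Suc t)\<close> unfolding E_def by auto
          moreover have "finite (E t)" unfolding E_def by auto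
          ultimately have cE: "card (E (Suc t)) = Suc (card (E t))" by simp
          have pM: "P h l \<ge> 1 / M" using Pmin[OF hq l(1,3)] .
          let ?X = "D / M ^ card (E t)"
          have X0': "?X \<ge> 0" using D0 Mpos by simp
          have i1: "P h l * (ws l - \<mu>) \<ge> P h l * (?X - real t * \<beta>)"
            using dl l(3) by (intro mult_left_mono) auto
          have i2: "P h l * (?X - real t * \<beta>) = P h l * ?X - P h l * (real t * \<beta>)" by (simp add: algebra_simps)
          have i3: "P h l * ?X \<ge> (1 / M) * ?X" using pM X0' by (intro mult_right_mono) auto
          have i4: "P h l * (real t * \<beta>) \<le> real t * \<beta>" using p1 beta_nn l(3) by (intro mult_left_le_one_le) auto
          have i5: "P h l * (ws l - \<mu>) \<ge> 1 / M * ?X - real t * \<beta>" using i1 i2 i3 i4 by linarith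
          have i6: "1 / M * ?X = D / M ^ card (E (Suc t))" unfolding cE using Mpos by (simp add: field_simps)
          have i7: "real (Suc t) * \<beta> = real t * \<beta> + \<beta>" by (simp add: algebra_simps)
          show ?thesis using wj i5 i6 i7 by linarith
        next
          case False
          have "P h l = 1" using det_row[OF hq False l(1,3)] .
          hence "ws j - \<mu> \<ge> - \<beta> + (ws l - \<mu>)" using wj by simp
          moreover have "D / M ^ card (E (Suc t)) \<le> D / M ^ card (E t)" using dpm Emono by blast
          moreover have "real (Suc t) * \<beta> = real t * \<beta> + \<beta>" by (simp add: algebra_simps)
          ultimately show ?thesis using dl by linarith
        qed
      qed
    qed
  qed
  define \<kappa> where "\<kappa> = min (card ND) (n - 1)"
  have eb: "card (E (n-1)) \<le> \<kappa>" using Ecard unfolding \<kappa>_def by (simp add: min.commute)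
  have "D / M ^ card (E (n-1)) - real (n-1) * \<beta> \<le> ws j\<mu> - \<mu>"
    using main[of "n-1"] j\<mu>(1) Lall by blast
  hence "D / M ^ card (E (n-1)) - real (n-1) * \<beta> \<le> 0" using j\<mu>(2) by simp
  hence "D / M ^ card (E (n-1)) \<le> real (n-1) * \<beta>" by simp
  hence Db1: "D \<le> real (n-1) * \<beta> * M ^ card (E (n-1))" using Mpos by (simp add: field_simps)
  have "M ^ card (E (n-1)) \<le> M ^ \<kappa>" using M1 eb by (intro power_increasing) auto
  hence "real (n-1) * \<beta> * M ^ card (E (n-1)) \<le> real (n-1) * \<beta> * M ^ \<kappa>"
    using beta_nn by (intro mult_left_mono) auto
  hence Db: "D \<le> real (n-1) * \<beta> * M ^ \<kappa>" using Db1 by linarith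
  show ?thesis
  proof (intro exI[of _ ws] allI impI conjI)
    fix j assume j: "j < n"
    show "ws j \<le> Phi ws j" using wsSub j unfolding Sub_def by auto
    show "ws j \<le> 0" using ws_le0[OF j] .
    have "- D \<le> ws j" using mule[OF j] unfolding D_def by simp
    thus "- (real (n - 1) * \<beta> * M ^ min (card {h. h < q \<and> nd n P h}) (n - 1)) \<le> ws j"
      using Db unfolding \<kappa>_def ND_def by linarith
  qed
qed

end

lemma Max_fun_mono: "finite S \<Longrightarrow> S \<noteq> {} \<Longrightarrow> (\<And>s. s \<in> S \<Longrightarrow> f s \<le> g s) \<Longrightarrow> Max (f ` S) \<le> Max (g ` S)"
  for f g :: "'a \<Rightarrow> real"
  by (rule Max.boundedI) (auto intro: order_trans[OF _ Max_ge])

lemma Min_fun_mono: "finite S \<Longrightarrow> S \<noteq> {} \<Longrightarrow> (\<And>s. s \<in> S \<Longrightarrow> f s \<le> g s) \<Longrightarrow> Min (f ` S) \<le> Min (g ` S)"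
  for f g :: "'a \<Rightarrow> real"
  by (rule Min.boundedI) (auto intro: order_trans[OF Min_le])

lemma Max_shift: "finite S \<Longrightarrow> S \<noteq> {} \<Longrightarrow> Max ((\<lambda>s. f s + t) ` S) = Max (f ` S) + (t::real)"
proof -
  assume S: "finite S" "S \<noteq> {}"
  have "(\<lambda>s. f s + t) ` S = (\<lambda>y. y + t) ` (f ` S)" by (auto simp: image_image)
  thus ?thesis using S by (simp add: mono_Max_commute[symmetric] mono_def)
qed

lemma Min_shift: "finite S \<Longrightarrow> S \<noteq> {} \<Longrightarrow> Min ((\<lambda>s. f s + t) ` S) = Min (f ` S) + (t::real)"
proof -
  assume S: "finite S" "S \<noteq> {}"
  have "(\<lambda>s. f s + t) ` S = (\<lambda>y. y + t) ` (f ` S)" by (auto simp: image_image)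
  thus ?thesis using S by (simp add: mono_Min_commute[symmetric] mono_def)
qed

lemma Min_neg: "finite S \<Longrightarrow> S \<noteq> {} \<Longrightarrow> Min ((\<lambda>s. - f s) ` S) = - Max (f ` S)" for f :: "'a \<Rightarrow> real"
proof -
  assume S: "finite S" "S \<noteq> {}"
  have "Max (f ` S) \<in> f ` S" using S by (intro Max_in) auto
  then obtain s0 where s0: "s0 \<in> S" "f s0 = Max (f ` S)" by (metis imageE)
  have le: "f s \<le> Max (f ` S)" if "s \<in> S" for s using S that by (intro Max_ge) auto
  show ?thesis
  proof (rule antisym)
    have "Min ((\<lambda>s. - f s) ` S) \<le> - f s0" using S s0(1) by (intro Min_le) auto
    thus "Min ((\<lambda>s. - f s) ` S) \<le> - Max (f ` S)" using s0 by simp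
    show "- Max (f ` S) \<le> Min ((\<lambda>s. - f s) ` S)" using S le by (intro Min.boundedI) auto
  qed
qed

lemma ereal_Max:
  fixes f :: "'a \<Rightarrow> ereal"
  assumes S: "finite S" and S': "{s \<in> S. f s \<noteq> -\<infinity>} \<noteq> {}" and ninf: "\<And>s. s \<in> S \<Longrightarrow> f s \<noteq> \<infinity>"
  shows "Max (f ` S) = ereal (Max ((\<lambda>s. real_of_ereal (f s)) ` {s \<in> S. f s \<noteq> -\<infinity>}))"
proof -
  let ?S' = "{s \<in> S. f s \<noteq> -\<infinity>}"
  have fin: "finite ?S'" using S by auto
  have "Max ((\<lambda>s. real_of_ereal (f s)) ` ?S') \<in> (\<lambda>s. real_of_ereal (f s)) ` ?S'" using S' by (intro Max_in finite_imageI fin) blast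
  then obtain s0 where s0: "s0 \<in> ?S'" "real_of_ereal (f s0) = Max ((\<lambda>s. real_of_ereal (f s)) ` ?S')" by (elim imageE) (rule that, assumption, simp)
  show ?thesis
  proof (rule Max_eqI)
    show "finite (f ` S)" using S by simp
    fix y assume "y \<in> f ` S"
    then obtain s where s: "s \<in> S" "y = f s" by auto
    show "y \<le> ereal (Max ((\<lambda>s. real_of_ereal (f s)) ` ?S'))"
    proof (cases "f s = -\<infinity>")
      case True thus ?thesis using s by simp
    next
      case False
      hence "real_of_ereal (f s) \<le> Max ((\<lambda>s. real_of_ereal (f s)) ` ?S')" using fin s by auto
      moreover have "f s = ereal (real_of_ereal (f s))" using False ninf[OF s(1)] by (cases "f s") auto
      ultimately show ?thesis using s by (metis ereal_less_eq(3))
    qed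
  next
    have "f s0 = ereal (real_of_ereal (f s0))" using s0 ninf by (cases "f s0") auto
    thus "ereal (Max ((\<lambda>s. real_of_ereal (f s)) ` ?S')) \<in> f ` S" using s0 by force
  qed
qed

lemma ereal_Min:
  fixes f :: "'a \<Rightarrow> ereal"
  assumes S: "finite S" and S': "{s \<in> S. f s \<noteq> \<infinity>} \<noteq> {}" and ninf: "\<And>s. s \<in> S \<Longrightarrow> f s \<noteq> -\<infinity>"
  shows "Min (f ` S) = ereal (Min ((\<lambda>s. real_of_ereal (f s)) ` {s \<in> S. f s \<noteq> \<infinity>}))"
proof -
  let ?S' = "{s \<in> S. f s \<noteq> \<infinity>}"
  have fin: "finite ?S'" using S by auto
  have "Min ((\<lambda>s. real_of_ereal (f s)) ` ?S') \<in> (\<lambda>s. real_of_ereal (f s)) ` ?S'" using S' by (intro Min_in finite_imageI fin) blast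
  then obtain s0 where s0: "s0 \<in> ?S'" "real_of_ereal (f s0) = Min ((\<lambda>s. real_of_ereal (f s)) ` ?S')" by (elim imageE) (rule that, assumption, simp)
  show ?thesis
  proof (rule Min_eqI)
    show "finite (f ` S)" using S by simp
    fix y assume "y \<in> f ` S"
    then obtain s where s: "s \<in> S" "y = f s" by auto
    show "ereal (Min ((\<lambda>s. real_of_ereal (f s)) ` ?S')) \<le> y"
    proof (cases "f s = \<infinity>")
      case True thus ?thesis using s by simp
    next
      case False
      hence "Min ((\<lambda>s. real_of_ereal (f s)) ` ?S') \<le> real_of_ereal (f s)" using fin s by auto
      moreover have "f s = ereal (real_of_ereal (f s))" using False ninf[OF s(1)] by (cases "f s") auto
      ultimately show ?thesis using s by (metis ereal_less_eq(3))
    qed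
  next
    have "f s0 = ereal (real_of_ereal (f s0))" using s0 ninf by (cases "f s0") auto
    thus "ereal (Min ((\<lambda>s. real_of_ereal (f s)) ` ?S')) \<in> f ` S" using s0 by force
  qed
qed

locale game =
  fixes m n q :: nat and A B :: "nat \<Rightarrow> nat \<Rightarrow> ereal" and P :: "nat \<Rightarrow> nat \<Rightarrow> real"
    and Q :: "nat \<Rightarrow> nat \<Rightarrow> int" and M :: int
  assumes n_pos: "n \<ge> 1"
    and A_int: "\<And>i j. i < m \<Longrightarrow> j < n \<Longrightarrow> A i j = -\<infinity> \<or> (\<exists>z::int. A i j = ereal (of_int z))"
    and B_int: "\<And>i h. i < m \<Longrightarrow> h < q \<Longrightarrow> B i h = -\<infinity> \<or> (\<exists>z::int. B i h = ereal (of_int z))"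
    and A_col: "\<And>j. j < n \<Longrightarrow> \<exists>i<m. A i j \<noteq> -\<infinity>"
    and B_row: "\<And>i. i < m \<Longrightarrow> \<exists>h<q. B i h \<noteq> -\<infinity>"
    and P_nonneg: "\<And>i l. i < q \<Longrightarrow> l < n \<Longrightarrow> P i l \<ge> 0"
    and P_stoch: "\<And>i. i < q \<Longrightarrow> (\<Sum>l<n. P i l) = 1"
    and M_pos: "M > 0"
    and P_rat: "\<And>i l. i < q \<Longrightarrow> l < n \<Longrightarrow> P i l = real_of_int (Q i l) / real_of_int M"
begin

abbreviation "F \<equiv> shapley m n q A B P"
definition "I j = {i. i < m \<and> A i j \<noteq> -\<infinity>}"
definition "H i = {h. h < q \<and> B i h \<noteq> -\<infinity>}"
definition "rA i j = real_of_ereal (A i j)"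
definition "rB i h = real_of_ereal (B i h)"
definition "val x i = Max ((\<lambda>h. rB i h + pv n P h x) ` H i)"

lemma I_fin: "finite (I j)" unfolding I_def by auto
lemma I_ne: "j < n \<Longrightarrow> I j \<noteq> {}" unfolding I_def using A_col by auto
lemma H_fin: "finite (H i)" unfolding H_def by auto
lemma H_ne: "i < m \<Longrightarrow> H i \<noteq> {}" unfolding H_def using B_row by auto
lemma I_m: "i \<in> I j \<Longrightarrow> i < m" unfolding I_def by auto
lemma H_q: "h \<in> H i \<Longrightarrow> h < q" unfolding H_def by auto

lemma A_fin: "i \<in> I j \<Longrightarrow> j < n \<Longrightarrow> A i j = ereal (rA i j)"
  using A_int[of i j] unfolding I_def rA_def by auto
lemma B_fin: "h \<in> H i \<Longrightarrow> i < m \<Longrightarrow> B i h = ereal (rB i h)"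
  using B_int[of i h] unfolding H_def rB_def by auto
lemma rA_int: "i \<in> I j \<Longrightarrow> j < n \<Longrightarrow> rA i j \<in> \<int>"
  using A_int[of i j] unfolding I_def rA_def by auto
lemma rB_int: "h \<in> H i \<Longrightarrow> i < m \<Longrightarrow> rB i h \<in> \<int>"
  using B_int[of i h] unfolding H_def rB_def by auto

lemma F_eq: assumes j: "j < n" shows "F x j = Min ((\<lambda>i. val x i - rA i j) ` I j)"
proof -
  define Y where "Y = trop_mv q B (\<lambda>h. ereal (mat_vec n P x h))"
  have Y: "Y i = ereal (val x i)" if i: "i < m" for i
  proof -
    have "Y i = Max ((\<lambda>h. B i h + ereal (mat_vec n P x h)) ` {..<q})" unfolding Y_def trop_mv_def ..
    also have "\<dots> = ereal (Max ((\<lambda>h. real_of_ereal (B i h + ereal (mat_vec n P x h))) ` {h \<in> {..<q}. B i h + ereal (mat_vec n P x h) \<noteq> -\<infinity>}))"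
    proof (rule ereal_Max)
      show "{h \<in> {..<q}. B i h + ereal (mat_vec n P x h) \<noteq> -\<infinity>} \<noteq> {}" using B_row[OF i] by auto
      show "B i h + ereal (mat_vec n P x h) \<noteq> \<infinity>" if "h \<in> {..<q}" for h using B_int[OF i, of h] that by auto
    qed simp
    also have "{h \<in> {..<q}. B i h + ereal (mat_vec n P x h) \<noteq> -\<infinity>} = H i" unfolding H_def by auto
    also have "(\<lambda>h. real_of_ereal (B i h + ereal (mat_vec n P x h))) ` H i = (\<lambda>h. rB i h + pv n P h x) ` H i"
      using B_fin[OF _ i] unfolding mat_vec_def pv_def by (intro image_cong refl) (metis plus_ereal.simps(1) real_of_ereal.simps(1))
    finally show ?thesis unfolding val_def .
  qed
  have "trop_sharp m A Y j = Min ((\<lambda>i. if A i j = -\<infinity> then \<infinity> else - A i j + Y i) ` {..<m})"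
    unfolding trop_sharp_def ..
  also have "\<dots> = ereal (Min ((\<lambda>i. real_of_ereal (if A i j = -\<infinity> then \<infinity> else - A i j + Y i)) ` {i \<in> {..<m}. (if A i j = -\<infinity> then \<infinity> else - A i j + Y i) \<noteq> \<infinity>}))"
  proof (rule ereal_Min)
    show "{i \<in> {..<m}. (if A i j = -\<infinity> then \<infinity> else - A i j + Y i) \<noteq> \<infinity>} \<noteq> {}"
    proof -
      obtain i where i: "i < m" "A i j \<noteq> -\<infinity>" using A_col[OF j] by auto
      hence "i \<in> I j" unfolding I_def by auto
      thus ?thesis using i A_fin[OF _ j] Y by (intro ex_in_conv[THEN iffD1] exI[of _ i]) auto
    qed
    show "(if A i j = -\<infinity> then \<infinity> else - A i j + Y i) \<noteq> -\<infinity>" if "i \<in> {..<m}" for i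
    proof (cases "A i j = -\<infinity>")
      case False
      hence "i \<in> I j" using that unfolding I_def by auto
      thus ?thesis using A_fin[OF _ j] Y[of i] that by auto
    qed simp
  qed simp
  also have "{i \<in> {..<m}. (if A i j = -\<infinity> then \<infinity> else - A i j + Y i) \<noteq> \<infinity>} = I j"
  proof -
    have h: "(if A i j = -\<infinity> then \<infinity> else - A i j + Y i) \<noteq> \<infinity> \<longleftrightarrow> A i j \<noteq> -\<infinity>" if "i < m" for i
    proof (cases "A i j = -\<infinity>")
      case False
      hence "i \<in> I j" using that unfolding I_def by auto
      thus ?thesis using A_fin[OF _ j] Y[of i] that by auto
    qed simp
    show ?thesis unfolding I_def using h lessThan_iff mem_Collect_eq by blast
  qed
  also have "(\<lambda>i. real_of_ereal (if A i j = -\<infinity> then \<infinity> else - A i j + Y i)) ` I j = (\<lambda>i. val x i - rA i j) ` I j"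
  proof (intro image_cong refl)
    fix i assume i: "i \<in> I j"
    hence "A i j \<noteq> -\<infinity>" "i < m" unfolding I_def by auto
    thus "real_of_ereal (if A i j = -\<infinity> then \<infinity> else - A i j + Y i) = val x i - rA i j"
      using A_fin[OF i j] Y by simp
  qed
  finally show ?thesis unfolding shapley_def Y_def by simp
qed

lemma pvg_mono: "h < q \<Longrightarrow> (\<And>l. l < n \<Longrightarrow> x l \<le> y l) \<Longrightarrow> pv n P h x \<le> pv n P h y"
  unfolding pv_def using P_nonneg by (intro sum_mono mult_left_mono) auto

lemma pvg_shift: "h < q \<Longrightarrow> pv n P h (\<lambda>l. x l + t) = pv n P h x + t"
  unfolding pv_def using P_stoch by (simp add: distrib_left sum.distrib sum_distrib_right[symmetric])

lemma val_mono: assumes "i < m" "\<And>l. l < n \<Longrightarrow> x l \<le> y l" shows "val x i \<le> val y i"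
  unfolding val_def using assms H_fin H_ne[OF assms(1)] pvg_mono H_q
  by (intro Max_fun_mono) (auto intro: add_left_mono)

lemma val_shift: assumes "i < m" shows "val (\<lambda>l. x l + t) i = val x i + t"
proof -
  have "val (\<lambda>l. x l + t) i = Max ((\<lambda>h. (rB i h + pv n P h x) + t) ` H i)"
    unfolding val_def using pvg_shift H_q by (intro arg_cong[where f=Max] image_cong) (auto simp: add.assoc)
  also have "\<dots> = val x i + t" unfolding val_def using H_fin H_ne[OF assms] by (rule Max_shift)
  finally show ?thesis .
qed

lemma F_mono: assumes j: "j < n" and xy: "\<And>l. l < n \<Longrightarrow> x l \<le> y l" shows "F x j \<le> F y j"
  unfolding F_eq[OF j] using I_fin I_ne[OF j] val_mono[OF _ xy] I_m
  by (intro Min_fun_mono) (auto intro: diff_right_mono)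

lemma F_shift: assumes j: "j < n" shows "F (\<lambda>l. x l + t) j = F x j + t"
proof -
  have "F (\<lambda>l. x l + t) j = Min ((\<lambda>i. (val x i - rA i j) + t) ` I j)"
    unfolding F_eq[OF j] using val_shift I_m by (intro arg_cong[where f=Min] image_cong) auto
  also have "\<dots> = F x j + t" unfolding F_eq[OF j] using I_fin I_ne[OF j] by (rule Min_shift)
  finally show ?thesis .
qed

lemma F_le_shift: assumes "\<And>l. l < n \<Longrightarrow> x l \<le> y l + c" "j < n" shows "F x j \<le> F y j + c"
  using F_mono[OF assms(2), of x "\<lambda>l. y l + c"] F_shift[OF assms(2), of y c] assms(1) by simp

lemma F_cong: assumes "\<And>l. l < n \<Longrightarrow> x l = y l" "j < n" shows "F x j = F y j"
  using F_le_shift[of x y 0 j] F_le_shift[of y x 0 j] assms by force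

lemma iter_le: assumes "\<And>l. l < n \<Longrightarrow> x l \<le> y l + c"
  shows "j < n \<Longrightarrow> (F ^^ k) x j \<le> (F ^^ k) y j + c"
proof (induction k arbitrary: j)
  case 0 then show ?case using assms by simp
next
  case (Suc k)
  show ?case using F_le_shift[OF Suc.IH Suc.prems] by simp
qed

lemma iter_bias: assumes b: "is_bias n F lam v" shows "j < n \<Longrightarrow> (F ^^ k) v j = real k * lam + v j"
proof (induction k arbitrary: j)
  case 0 then show ?case by simp
next
  case (Suc k)
  have "(F ^^ Suc k) v j = F ((F ^^ k) v) j" by simp
  also have "\<dots> = F (\<lambda>l. v l + real k * lam) j" using Suc.IH Suc.prems by (intro F_cong) auto
  also have "\<dots> = F v j + real k * lam" using F_shift[OF Suc.prems] .
  also have "\<dots> = real (Suc k) * lam + v j" using b Suc.prems unfolding is_bias_def by (simp add: algebra_simps)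
  finally show ?case .
qed

definition "spn v = Max (v ` {..<n}) - Min (v ` {..<n})"

lemma vfin: "finite (v ` {..<n})" "v ` {..<n} \<noteq> {}" using n_pos by (auto simp: lessThan_empty_iff)

lemma u_bounds: assumes b: "is_bias n F lam v" and j: "j < n"
  shows "real k * lam - spn v \<le> value_iter F k j \<and> value_iter F k j \<le> real k * lam + spn v"
proof -
  let ?mx = "Max (v ` {..<n})" and ?mn = "Min (v ` {..<n})"
  have mx: "v l \<le> ?mx" "?mn \<le> v l" if "l < n" for l using vfin that by auto
  have up: "(F ^^ k) (\<lambda>_. 0) j \<le> (F ^^ k) v j + (- ?mn)"
    using mx by (intro iter_le[OF _ j]) auto
  have lo: "(F ^^ k) v j \<le> (F ^^ k) (\<lambda>_. 0) j + ?mx"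
    using mx by (intro iter_le[OF _ j]) auto
  have "?mn \<le> v j" "v j \<le> ?mx" using mx j by auto
  thus ?thesis using up lo iter_bias[OF b j, of k] unfolding value_iter_def spn_def by auto
qed

lemma bias_unique: assumes b: "is_bias n F lam v" and b': "is_bias n F lam' v'" shows "lam = lam'"
proof (rule ccontr)
  assume ne: "lam \<noteq> lam'"
  have j: "0 < n" using n_pos by simp
  obtain k where k: "spn v + spn v' < real k * \<bar>lam - lam'\<bar>"
    using ex_less_of_nat_mult[of "\<bar>lam - lam'\<bar>" "spn v + spn v'"] ne by auto
  have "\<bar>real k * lam - real k * lam'\<bar> \<le> spn v + spn v'"
    using u_bounds[OF b j, of k] u_bounds[OF b' j, of k] by linarith
  moreover have "\<bar>real k * lam - real k * lam'\<bar> = real k * \<bar>lam - lam'\<bar>"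
    by (simp add: abs_mult right_diff_distrib[symmetric])
  ultimately show False using k by simp
qed

lemma ergodic_eq: assumes b: "is_bias n F lam v" shows "ergodic_const n F = lam"
  unfolding ergodic_const_def
proof (rule the_equality)
  show "\<exists>v. is_bias n F lam v" using b by blast
  show "\<And>lam'. \<exists>v. is_bias n F lam' v \<Longrightarrow> lam' = lam" using bias_unique[OF b] by metis
qed

end

context game
begin

lemma u_funpow_mult: "value_iter F (Suc t * N) = (F ^^ N) (value_iter F (t * N))"
  unfolding value_iter_def by (simp add: funpow_add)

lemma neg_stop: assumes b: "is_bias n F lam v" and a: "Max (value_iter F N ` {..<n}) < 0"
  shows "lam < 0"
proof (rule ccontr)
  assume "\<not> lam < 0" hence l0: "lam \<ge> 0" by simp
  define a where "a = Max (value_iter F N ` {..<n})"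
  have ale: "value_iter F N j \<le> a" if "j < n" for j unfolding a_def using that by (intro Max_ge) auto
  have main: "value_iter F (t * N) j \<le> real t * a" if "j < n" for t j
    using that
  proof (induction t arbitrary: j)
    case 0 then show ?case by (simp add: value_iter_def)
  next
    case (Suc t)
    have "value_iter F (Suc t * N) j = (F ^^ N) (value_iter F (t * N)) j" by (simp only: u_funpow_mult)
    also have "\<dots> \<le> (F ^^ N) (\<lambda>_. 0) j + real t * a" using Suc.IH by (intro iter_le[OF _ Suc.prems]) auto
    also have "\<dots> \<le> a + real t * a" using ale[OF Suc.prems] unfolding value_iter_def by simp
    finally show ?case by (simp add: algebra_simps)
  qed
  have j: "0 < n" using n_pos by simp
  obtain t where t: "spn v < real t * (- a)" using ex_less_of_nat_mult[of "- a" "spn v"] a a_def by auto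
  have "real (t * N) * lam - spn v \<le> value_iter F (t * N) 0" using u_bounds[OF b j] by blast
  moreover have "real (t * N) * lam \<ge> 0" using l0 by simp
  ultimately have "- spn v \<le> real t * a" using main[OF j, of t] by linarith
  thus False using t by simp
qed

lemma pos_stop: assumes b: "is_bias n F lam v" and a: "Min (value_iter F N ` {..<n}) > 0"
  shows "lam > 0"
proof (rule ccontr)
  assume "\<not> lam > 0" hence l0: "lam \<le> 0" by simp
  define a where "a = Min (value_iter F N ` {..<n})"
  have ale: "a \<le> value_iter F N j" if "j < n" for j unfolding a_def using that by (intro Min_le) auto
  have main: "real t * a \<le> value_iter F (t * N) j" if "j < n" for t j
    using that
  proof (induction t arbitrary: j)
    case 0 then show ?case by (simp add: value_iter_def)
  next
    case (Suc t)
    have "a + real t * a \<le> (F ^^ N) (\<lambda>_. 0) j + real t * a" using ale[OF Suc.prems] unfolding value_iter_def by simp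
    also have "\<dots> \<le> (F ^^ N) (value_iter F (t * N)) j"
      using Suc.IH iter_le[OF _ Suc.prems, of "\<lambda>_. 0" "value_iter F (t * N)" "- (real t * a)" N]
      by (force simp: algebra_simps)
    also have "\<dots> = value_iter F (Suc t * N) j" by (simp only: u_funpow_mult)
    finally show ?case by (simp add: algebra_simps)
  qed
  have j: "0 < n" using n_pos by simp
  obtain t where t: "spn v < real t * a" using ex_less_of_nat_mult[of a "spn v"] a a_def by auto
  have "value_iter F (t * N) 0 \<le> real (t * N) * lam + spn v" using u_bounds[OF b j] by blast
  moreover have "real (t * N) * lam \<le> 0" using l0 by (simp add: mult_nonneg_nonpos)
  ultimately have "real t * a \<le> spn v" using main[OF j, of t] by linarith
  thus False using t by simp
qed

abbreviation "W \<equiv> weight_W m n q A B"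

lemma W_ge: assumes j: "j < n" and i: "i \<in> I j" and h: "h \<in> H i" shows "\<bar>rB i h - rA i j\<bar> \<le> W"
proof -
  let ?S = "{\<bar>real_of_ereal (A i j) - real_of_ereal (B i h)\<bar> | i j h.
      i < m \<and> j < n \<and> h < q \<and> A i j \<noteq> -\<infinity> \<and> B i h \<noteq> -\<infinity>}"
  have "?S \<subseteq> (\<lambda>(i,j,h). \<bar>real_of_ereal (A i j) - real_of_ereal (B i h)\<bar>) ` ({..<m} \<times> {..<n} \<times> {..<q})"
    by force
  hence fin: "finite ?S" by (rule finite_subset) auto
  have "\<bar>real_of_ereal (A i j) - real_of_ereal (B i h)\<bar> \<in> ?S"
    using i h j unfolding I_def H_def by blast
  hence "\<bar>real_of_ereal (A i j) - real_of_ereal (B i h)\<bar> \<le> W" unfolding weight_W_def using fin by (intro Max_ge) auto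
  thus ?thesis unfolding rA_def rB_def by (simp add: abs_minus_commute)
qed

lemma pv_le_max: "h < q \<Longrightarrow> pv n P h v \<le> Max (v ` {..<n})"
proof -
  assume h: "h < q"
  have "pv n P h v \<le> (\<Sum>l<n. P h l * Max (v ` {..<n}))"
    unfolding pv_def using P_nonneg[OF h] vfin by (intro sum_mono mult_left_mono) auto
  also have "\<dots> = Max (v ` {..<n})" using P_stoch[OF h] by (simp add: sum_distrib_right[symmetric])
  finally show ?thesis .
qed

lemma pv_ge_min: "h < q \<Longrightarrow> Min (v ` {..<n}) \<le> pv n P h v"
proof -
  assume h: "h < q"
  have "(\<Sum>l<n. P h l * Min (v ` {..<n})) \<le> pv n P h v"
    unfolding pv_def using P_nonneg[OF h] vfin by (intro sum_mono mult_left_mono) auto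
  moreover have "(\<Sum>l<n. P h l * Min (v ` {..<n})) = Min (v ` {..<n})" using P_stoch[OF h] by (simp add: sum_distrib_right[symmetric])
  ultimately show ?thesis by simp
qed

lemma val_attained: "i < m \<Longrightarrow> \<exists>h\<in>H i. val x i = rB i h + pv n P h x"
proof -
  assume i: "i < m"
  have "val x i \<in> (\<lambda>h. rB i h + pv n P h x) ` H i" unfolding val_def using H_fin H_ne[OF i] by (intro Max_in) auto
  thus ?thesis by auto
qed

lemma val_ge: "h \<in> H i \<Longrightarrow> rB i h + pv n P h x \<le> val x i"
  unfolding val_def using H_fin by (intro Max_ge) auto

lemma F_attained: "j < n \<Longrightarrow> \<exists>i\<in>I j. F x j = val x i - rA i j"
proof -
  assume j: "j < n"
  have "F x j \<in> (\<lambda>i. val x i - rA i j) ` I j" unfolding F_eq[OF j] using I_fin I_ne[OF j] by (intro Min_in) auto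
  thus ?thesis by auto
qed

lemma F_le: "j < n \<Longrightarrow> i \<in> I j \<Longrightarrow> F x j \<le> val x i - rA i j"
  unfolding F_eq using I_fin by (intro Min_le) auto

lemma lam_le_W: assumes b: "is_bias n F lam v" shows "\<bar>lam\<bar> \<le> W"
proof -
  obtain j1 where j1: "j1 < n" "v j1 = Max (v ` {..<n})" using Max_in[OF vfin] by (metis imageE lessThan_iff)
  obtain i1 where i1: "i1 \<in> I j1" using I_ne[OF j1(1)] by auto
  obtain h1 where h1: "h1 \<in> H i1" "val v i1 = rB i1 h1 + pv n P h1 v" using val_attained I_m[OF i1] by blast
  have "lam + v j1 = F v j1" using b j1 unfolding is_bias_def by simp
  also have "\<dots> \<le> val v i1 - rA i1 j1" using F_le[OF j1(1) i1] .
  also have "\<dots> \<le> (rB i1 h1 - rA i1 j1) + Max (v ` {..<n})" using h1 pv_le_max[OF H_q[OF h1(1)], of v] by simp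
  also have "\<dots> \<le> W + v j1" using W_ge[OF j1(1) i1 h1(1)] j1(2) by simp
  finally have u: "lam \<le> W" by simp
  obtain j2 where j2: "j2 < n" "v j2 = Min (v ` {..<n})" using Min_in[OF vfin] by (metis imageE lessThan_iff)
  obtain i2 where i2: "i2 \<in> I j2" "F v j2 = val v i2 - rA i2 j2" using F_attained[OF j2(1)] by blast
  obtain h2 where h2: "h2 \<in> H i2" using H_ne[OF I_m[OF i2(1)]] by auto
  have "- W + v j2 \<le> (rB i2 h2 - rA i2 j2) + Min (v ` {..<n})" using W_ge[OF j2(1) i2(1) h2] j2(2) by simp
  also have "\<dots> \<le> val v i2 - rA i2 j2" using val_ge[OF h2, of v] pv_ge_min[OF H_q[OF h2], of v] by simp
  also have "\<dots> = lam + v j2" using b j2 i2 unfolding is_bias_def by simp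
  finally have "- W \<le> lam" by simp
  thus ?thesis using u by simp
qed

end

context game
begin

lemma Mr: "real_of_int M \<ge> 1" using M_pos by simp

lemma Pmin: "h < q \<Longrightarrow> l < n \<Longrightarrow> P h l > 0 \<Longrightarrow> P h l \<ge> 1 / real_of_int M"
proof -
  assume a: "h < q" "l < n" "P h l > 0"
  hence "real_of_int (Q h l) > 0" using P_rat[OF a(1,2)] M_pos by (simp add: zero_less_divide_iff)
  hence "Q h l \<ge> 1" by simp
  thus ?thesis using P_rat[OF a(1,2)] M_pos by (simp add: divide_right_mono)
qed

abbreviation "kap \<equiv> min (num_nondet q n P) (n - 1)"

lemma num_nondet_eq: "num_nondet q n P = card {h. h < q \<and> nd n P h}"
  unfolding num_nondet_def nd_def ..

lemma pv_neg: "pv n P h (\<lambda>l. - x l) = - pv n P h x" unfolding pv_def by (simp add: sum_negf)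

lemma span_pos:
  assumes b: "is_bias n F lam v"
  shows "\<exists>w. \<forall>j<n. lam + w j \<le> F w j \<and> w j \<le> 0 \<and>
     - (real (n - 1) * (W + \<bar>lam\<bar>) * real_of_int M ^ kap) \<le> w j"
proof -
  define \<tau> where "\<tau> i = (SOME h. h \<in> H i \<and> val v i = rB i h + pv n P h v)" for i
  have tau: "\<tau> i \<in> H i \<and> val v i = rB i (\<tau> i) + pv n P (\<tau> i) v" if "i < m" for i
    unfolding \<tau>_def using val_attained[OF that, of v] by (rule someI_ex[OF bexE]) blast
  have tauH: "\<tau> i \<in> H i" if "i \<in> I j" for i j using tau[OF I_m[OF that]] by blast
  define Act where "Act j = (\<lambda>i. (rB i (\<tau> i) - rA i j - lam, \<tau> i)) ` I j" for j
  interpret mdp n q Act P "real_of_int M" "W + \<bar>lam\<bar>"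
  proof
    show "1 \<le> n" using n_pos .
    show "\<And>j. j < n \<Longrightarrow> finite (Act j)" unfolding Act_def using I_fin by auto
    show "\<And>j. j < n \<Longrightarrow> Act j \<noteq> {}" unfolding Act_def using I_ne by auto
    show "\<And>j c h. j < n \<Longrightarrow> (c, h) \<in> Act j \<Longrightarrow> h < q" unfolding Act_def using tau I_m H_q by force
    show "\<bar>c\<bar> \<le> W + \<bar>lam\<bar>" if jj: "j < n" "(c, h) \<in> Act j" for j c h
    proof -
      obtain i where i: "i \<in> I j" "c = rB i (\<tau> i) - rA i j - lam" using jj unfolding Act_def by auto
      have "\<bar>rB i (\<tau> i) - rA i j\<bar> \<le> W" using W_ge[OF jj(1) i(1)] tau[OF I_m[OF i(1)]] by blast
      thus ?thesis using i by linarith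
    qed
    show "\<And>h l. h < q \<Longrightarrow> l < n \<Longrightarrow> 0 \<le> P h l" using P_nonneg .
    show "\<And>h. h < q \<Longrightarrow> sum (P h) {..<n} = 1" using P_stoch .
    show "\<And>h l. h < q \<Longrightarrow> l < n \<Longrightarrow> 0 < P h l \<Longrightarrow> 1 / real_of_int M \<le> P h l" using Pmin .
    show "1 \<le> real_of_int M" using Mr .
  qed
  have phi_eq: "Phi x j = Min ((\<lambda>i. (rB i (\<tau> i) + pv n P (\<tau> i) x - rA i j) + (- lam)) ` I j)" for x j
    unfolding phi_def Act_def image_image by (simp add: algebra_simps)
  have fixp: "Phi v j = v j" if j: "j < n" for j
  proof -
    have "Phi v j = Min ((\<lambda>i. (val v i - rA i j) + (- lam)) ` I j)"
      unfolding phi_eq using tau I_m by (intro arg_cong[where f=Min] image_cong) auto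
    also have "\<dots> = F v j - lam" unfolding F_eq[OF j] using Min_shift[OF I_fin I_ne[OF j], of "\<lambda>i. val v i - rA i j" "- lam"] by simp
    finally show ?thesis using b j unfolding is_bias_def by simp
  qed
  obtain w where w: "\<forall>j<n. w j \<le> Phi w j \<and> w j \<le> 0 \<and>
     - (real (n - 1) * (W + \<bar>lam\<bar>) * real_of_int M ^ min (card {h. h < q \<and> nd n P h}) (n - 1)) \<le> w j"
    using span_main[OF fixp] by blast
  have w1: "w j \<le> Phi w j" and w2: "w j \<le> 0"
    and w3: "- (real (n - 1) * (W + \<bar>lam\<bar>) * real_of_int M ^ kap) \<le> w j" if "j < n" for j
    using w that unfolding num_nondet_eq by auto
  show ?thesis
  proof (intro exI[of _ w] allI impI conjI)
    fix j assume j: "j < n"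
    have "Phi w j + lam = Min ((\<lambda>i. rB i (\<tau> i) + pv n P (\<tau> i) w - rA i j) ` I j)"
      unfolding phi_eq using Min_shift[OF I_fin I_ne[OF j], of "\<lambda>i. rB i (\<tau> i) + pv n P (\<tau> i) w - rA i j" "- lam"] by simp
    also have "\<dots> \<le> F w j" unfolding F_eq[OF j]
    proof (rule Min_fun_mono[OF I_fin I_ne[OF j]])
      fix i assume i: "i \<in> I j"
      show "rB i (\<tau> i) + pv n P (\<tau> i) w - rA i j \<le> val w i - rA i j"
        using val_ge[OF tauH[OF i], of w] by simp
    qed
    finally have "Phi w j + lam \<le> F w j" .
    moreover have "w j \<le> Phi w j" using w1[OF j] .
    ultimately show "lam + w j \<le> F w j" by linarith
    show "w j \<le> 0" using w2[OF j] .
    show "- (real (n - 1) * (W + \<bar>lam\<bar>) * real_of_int M ^ kap) \<le> w j" using w3[OF j] .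
  qed
qed

lemma span_neg:
  assumes b: "is_bias n F lam v"
  shows "\<exists>w. \<forall>j<n. F w j \<le> lam + w j \<and> w j \<ge> 0 \<and>
     w j \<le> real (n - 1) * (W + \<bar>lam\<bar>) * real_of_int M ^ kap"
proof -
  define \<sigma> where "\<sigma> j = (SOME i. i \<in> I j \<and> F v j = val v i - rA i j)" for j
  have sig: "\<sigma> j \<in> I j \<and> F v j = val v (\<sigma> j) - rA (\<sigma> j) j" if "j < n" for j
    unfolding \<sigma>_def using F_attained[OF that, of v] by (rule someI_ex[OF bexE]) blast
  have sigI: "\<sigma> j \<in> I j" and sigF: "F v j = val v (\<sigma> j) - rA (\<sigma> j) j" if "j < n" for j
    using sig[OF that] by auto
  have sigm: "\<sigma> j < m" if "j < n" for j using I_m[OF sigI[OF that]] .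
  define Act where "Act j = (\<lambda>h. (rA (\<sigma> j) j - rB (\<sigma> j) h + lam, h)) ` H (\<sigma> j)" for j
  interpret mdp n q Act P "real_of_int M" "W + \<bar>lam\<bar>"
  proof
    show "1 \<le> n" using n_pos .
    show "\<And>j. j < n \<Longrightarrow> finite (Act j)" unfolding Act_def using H_fin by auto
    show "\<And>j. j < n \<Longrightarrow> Act j \<noteq> {}" unfolding Act_def using H_ne sigm by simp
    show "\<And>j c h. j < n \<Longrightarrow> (c, h) \<in> Act j \<Longrightarrow> h < q" unfolding Act_def using H_q by force
    show "\<bar>c\<bar> \<le> W + \<bar>lam\<bar>" if jj: "j < n" "(c, h) \<in> Act j" for j c h
    proof -
      obtain h' where i: "h' \<in> H (\<sigma> j)" "c = rA (\<sigma> j) j - rB (\<sigma> j) h' + lam" using jj unfolding Act_def by auto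
      have "\<bar>rB (\<sigma> j) h' - rA (\<sigma> j) j\<bar> \<le> W" using W_ge[OF jj(1) sigI[OF jj(1)] i(1)] .
      thus ?thesis using i by linarith
    qed
    show "\<And>h l. h < q \<Longrightarrow> l < n \<Longrightarrow> 0 \<le> P h l" using P_nonneg .
    show "\<And>h. h < q \<Longrightarrow> sum (P h) {..<n} = 1" using P_stoch .
    show "\<And>h l. h < q \<Longrightarrow> l < n \<Longrightarrow> 0 < P h l \<Longrightarrow> 1 / real_of_int M \<le> P h l" using Pmin .
    show "1 \<le> real_of_int M" using Mr .
  qed
  have phi_eq: "Phi x j = Min ((\<lambda>h. rA (\<sigma> j) j - rB (\<sigma> j) h + lam + pv n P h x) ` H (\<sigma> j))" for x j
    unfolding phi_def Act_def image_image by simp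
  have fixp: "Phi (\<lambda>l. - v l) j = - v j" if j: "j < n" for j
  proof -
    have si: "\<sigma> j < m" using sigm[OF j] .
    have "Phi (\<lambda>l. - v l) j = Min ((\<lambda>h. - (rB (\<sigma> j) h + pv n P h v) + (rA (\<sigma> j) j + lam)) ` H (\<sigma> j))"
      unfolding phi_eq pv_neg by (simp add: algebra_simps)
    also have "\<dots> = Min ((\<lambda>h. - (rB (\<sigma> j) h + pv n P h v)) ` H (\<sigma> j)) + (rA (\<sigma> j) j + lam)"
      using Min_shift[OF H_fin H_ne[OF si], of "\<lambda>h. - (rB (\<sigma> j) h + pv n P h v)" "rA (\<sigma> j) j + lam"] by simp
    also have "\<dots> = - val v (\<sigma> j) + (rA (\<sigma> j) j + lam)"
      unfolding val_def using Min_neg[OF H_fin H_ne[OF si], of "\<lambda>h. rB (\<sigma> j) h + pv n P h v"] by simp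
    also have "\<dots> = - v j" using sigF[OF j] b j unfolding is_bias_def by simp
    finally show ?thesis .
  qed
  obtain w where w: "\<forall>j<n. w j \<le> Phi w j \<and> w j \<le> 0 \<and>
     - (real (n - 1) * (W + \<bar>lam\<bar>) * real_of_int M ^ min (card {h. h < q \<and> nd n P h}) (n - 1)) \<le> w j"
    using span_main[OF fixp] by blast
  have w1: "w j \<le> Phi w j" and w2: "w j \<le> 0"
    and w3: "- (real (n - 1) * (W + \<bar>lam\<bar>) * real_of_int M ^ kap) \<le> w j" if "j < n" for j
    using w that unfolding num_nondet_eq by auto
  show ?thesis
  proof (intro exI[of _ "\<lambda>l. - w l"] allI impI conjI)
    fix j assume j: "j < n"
    have si: "\<sigma> j < m" using sigm[OF j] .
    have "val (\<lambda>l. - w l) (\<sigma> j) \<le> lam - w j + rA (\<sigma> j) j"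
      unfolding val_def
    proof (rule Max.boundedI)
      show "finite ((\<lambda>h. rB (\<sigma> j) h + pv n P h (\<lambda>l. - w l)) ` H (\<sigma> j))" using H_fin by simp
      show "(\<lambda>h. rB (\<sigma> j) h + pv n P h (\<lambda>l. - w l)) ` H (\<sigma> j) \<noteq> {}" using H_ne[OF si] by simp
      fix y assume "y \<in> (\<lambda>h. rB (\<sigma> j) h + pv n P h (\<lambda>l. - w l)) ` H (\<sigma> j)"
      then obtain h where h: "h \<in> H (\<sigma> j)" "y = rB (\<sigma> j) h + pv n P h (\<lambda>l. - w l)" by auto
      have "(rA (\<sigma> j) j - rB (\<sigma> j) h + lam, h) \<in> Act j" unfolding Act_def using h by auto
      hence "Phi w j \<le> rA (\<sigma> j) j - rB (\<sigma> j) h + lam + pv n P h w" using Phi_le[OF j] by force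
      thus "y \<le> lam - w j + rA (\<sigma> j) j" using w1[OF j] h(2) unfolding pv_neg by linarith
    qed
    moreover have "F (\<lambda>l. - w l) j \<le> val (\<lambda>l. - w l) (\<sigma> j) - rA (\<sigma> j) j" using F_le[OF j sigI[OF j]] .
    ultimately show "F (\<lambda>l. - w l) j \<le> lam + - w j" by simp
    have "w j \<le> 0" using w2[OF j] .
    thus "0 \<le> - w j" by simp
    have "- (real (n - 1) * (W + \<bar>lam\<bar>) * real_of_int M ^ kap) \<le> w j" using w3[OF j] .
    thus "- w j \<le> real (n - 1) * (W + \<bar>lam\<bar>) * real_of_int M ^ kap" by simp
  qed
qed

end

context game
begin

lemma Mr': "real_of_int M \<ge> 1" using M_pos by simp

lemma det_int: assumes h: "h < q" "\<not> nd n P h" and l: "l < n" shows "P h l \<in> \<int>"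
proof (cases "P h l > 0")
  case True
  have z: "P h l' = 0" if "l' < n" "l' \<noteq> l" for l'
    using h P_nonneg[OF h(1) that(1)] that l True unfolding nd_def by force
  have "(\<Sum>l'<n. P h l') = P h l" using l z by (subst sum.remove[of _ l]) (auto intro!: sum.neutral)
  thus ?thesis using P_stoch[OF h(1)] by simp
next
  case False thus ?thesis using P_nonneg[OF h(1) l] by simp
qed

lemma MP_int: "h < q \<Longrightarrow> l < n \<Longrightarrow> real_of_int M * P h l \<in> \<int>"
  using P_rat M_pos by simp

lemma lam_lb: assumes b: "is_bias n F lam v" and ne: "lam \<noteq> 0"
  shows "1 / (real n * real_of_int M ^ min (card {h. h < q \<and> nd n P h}) (n - 1)) \<le> \<bar>lam\<bar>"
proof -
  define \<sigma> where "\<sigma> j = (SOME i. i \<in> I j \<and> F v j = val v i - rA i j)" for j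
  have sig: "\<sigma> j \<in> I j \<and> F v j = val v (\<sigma> j) - rA (\<sigma> j) j" if "j < n" for j
    unfolding \<sigma>_def using F_attained[OF that, of v] by (rule someI_ex[OF bexE]) blast
  define \<tau> where "\<tau> i = (SOME h. h \<in> H i \<and> val v i = rB i h + pv n P h v)" for i
  have tau: "\<tau> i \<in> H i \<and> val v i = rB i (\<tau> i) + pv n P (\<tau> i) v" if "i < m" for i
    unfolding \<tau>_def using val_attained[OF that, of v] by (rule someI_ex[OF bexE]) blast
  define \<rho> where "\<rho> j = \<tau> (\<sigma> j)" for j
  define c where "c j = rB (\<sigma> j) (\<rho> j) - rA (\<sigma> j) j" for j
  have sigm: "\<sigma> j < m" "\<sigma> j \<in> I j" if "j < n" for j using sig[OF that] I_m by blast+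
  have rhoH: "\<rho> j \<in> H (\<sigma> j)" if "j < n" for j unfolding \<rho>_def using tau[OF sigm(1)[OF that]] by blast
  have rhoq: "\<rho> j < q" if "j < n" for j using H_q[OF rhoH[OF that]] .
  have eig: "lam + v j = c j + pv n P (\<rho> j) v" if j: "j < n" for j
    using b j sig[OF j] tau[OF sigm(1)[OF j]] unfolding is_bias_def c_def \<rho>_def by simp
  have cint: "c j \<in> \<int>" if j: "j < n" for j
    unfolding c_def using rB_int[OF rhoH[OF j] sigm(1)[OF j]] rA_int[OF sigm(2)[OF j] j] by simp
  define K where "K h h' = (\<Sum>l<n. if \<rho> l = h' then P h l else 0)" for h h'
  define ND where "ND = {h. h < q \<and> nd n P h}"
  define X0 where "X0 = \<rho> ` {..<n}"
  have Ksum: "(\<Sum>h'<q. K h h' * Y h') = (\<Sum>l<n. P h l * Y (\<rho> l))" for h Y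
  proof -
    have "(\<Sum>h'<q. K h h' * Y h') = (\<Sum>h'<q. \<Sum>l<n. if \<rho> l = h' then P h l * Y h' else 0)"
      unfolding K_def sum_distrib_right by (intro sum.cong refl) auto
    also have "\<dots> = (\<Sum>l<n. \<Sum>h'<q. if \<rho> l = h' then P h l * Y h' else 0)" by (rule sum.swap)
    also have "\<dots> = (\<Sum>l<n. P h l * Y (\<rho> l))" using rhoq by (intro sum.cong refl) (simp add: sum.delta)
    finally show ?thesis .
  qed
  obtain C \<psi> where C: "C \<subseteq> X0" "C \<noteq> {}" and psi01: "\<forall>x<q. 0 \<le> \<psi> x \<and> \<psi> x \<le> 1"
    and psiC: "\<forall>x<q. x \<notin> C \<longrightarrow> \<psi> x = 0" and psipos: "\<exists>c\<in>C. \<psi> c > 0"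
    and stat: "\<forall>z<q. (\<Sum>x<q. \<psi> x * K x z) = \<psi> z"
    and intg: "\<forall>x<q. real_of_int M ^ card (C \<inter> ND - {x}) * \<psi> x \<in> \<int>"
  proof -
    have "\<exists>C \<psi>. C \<subseteq> X0 \<and> C \<noteq> {} \<and> (\<forall>x<q. 0 \<le> \<psi> x \<and> \<psi> x \<le> 1) \<and> (\<forall>x<q. x \<notin> C \<longrightarrow> \<psi> x = 0)
     \<and> (\<exists>c\<in>C. \<psi> c > 0) \<and> (\<forall>z<q. (\<Sum>x<q. \<psi> x * K x z) = \<psi> z)
     \<and> (\<forall>x<q. real_of_int M ^ card (C \<inter> ND - {x}) * \<psi> x \<in> \<int>)"
    proof (rule stationary_exists)
      show "\<And>x z. x < q \<Longrightarrow> z < q \<Longrightarrow> 0 \<le> K x z" unfolding K_def using P_nonneg by (auto intro!: sum_nonneg)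
      show "(\<Sum>z<q. K x z) = 1" if "x < q" for x using Ksum[of x "\<lambda>_. 1"] P_stoch[OF that] by simp
      show "X0 \<subseteq> {..<q}" unfolding X0_def using rhoq by auto
      show "X0 \<noteq> {}" unfolding X0_def using n_pos by (auto simp: lessThan_empty_iff)
      show "z \<in> X0" if "x \<in> X0" "z < q" "0 < K x z" for x z
      proof (rule ccontr)
        assume "z \<notin> X0"
        hence "K x z = 0" unfolding K_def X0_def by (intro sum.neutral) auto
        thus False using that by simp
      qed
      show "ND \<subseteq> {..<q}" unfolding ND_def by auto
      show "real_of_int M * K x z \<in> \<int>" if "x < q" "z < q" "x \<in> ND" for x z
        unfolding K_def sum_distrib_left using MP_int[OF that(1)] by (intro Ints_sum) auto
      show "K x z \<in> \<int>" if xx: "x < q" "z < q" "x \<notin> ND" for x z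
      proof -
        have "\<not> nd n P x" using xx unfolding ND_def by auto
        thus ?thesis unfolding K_def using det_int[OF xx(1)] by (intro Ints_sum) auto
      qed
    qed
    thus ?thesis using that by blast
  qed
  define \<pi> where "\<pi> l = (\<Sum>h<q. \<psi> h * P h l)" for l
  have key: "lam * (\<Sum>h<q. \<psi> h) = (\<Sum>l<n. c l * \<pi> l)"
  proof -
    have s1: "(\<Sum>h<q. \<psi> h * pv n P h v) = (\<Sum>l<n. \<pi> l * v l)"
      unfolding pv_def \<pi>_def sum_distrib_left sum_distrib_right
      by (subst sum.swap) (simp add: ac_simps)
    have s3: "(\<Sum>l<n. \<pi> l * pv n P (\<rho> l) v) = (\<Sum>h<q. \<psi> h * pv n P h v)"
    proof -
      have "(\<Sum>l<n. \<pi> l * pv n P (\<rho> l) v) = (\<Sum>h<q. \<psi> h * (\<Sum>l<n. P h l * pv n P (\<rho> l) v))"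
        unfolding \<pi>_def sum_distrib_right sum_distrib_left by (subst sum.swap) (simp add: ac_simps)
      also have "\<dots> = (\<Sum>h<q. \<psi> h * (\<Sum>h'<q. K h h' * pv n P h' v))" using Ksum by simp
      also have "\<dots> = (\<Sum>h'<q. (\<Sum>h<q. \<psi> h * K h h') * pv n P h' v)"
        unfolding sum_distrib_left sum_distrib_right by (subst sum.swap) (simp add: ac_simps)
      also have "\<dots> = (\<Sum>h'<q. \<psi> h' * pv n P h' v)" using stat by simp
      finally show ?thesis .
    qed
    have s4: "(\<Sum>l<n. \<pi> l) = (\<Sum>h<q. \<psi> h)"
    proof -
      have "(\<Sum>l<n. \<pi> l) = (\<Sum>h<q. \<psi> h * (\<Sum>l<n. P h l))"
        unfolding \<pi>_def sum_distrib_left by (rule sum.swap)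
      also have "\<dots> = (\<Sum>h<q. \<psi> h)" using P_stoch by simp
      finally show ?thesis .
    qed
    have "(\<Sum>l<n. \<pi> l * v l) = (\<Sum>l<n. \<pi> l * (c l - lam + pv n P (\<rho> l) v))"
    proof (intro sum.cong refl)
      fix l assume "l \<in> {..<n}"
      hence "v l = c l - lam + pv n P (\<rho> l) v" using eig[of l] by simp
      thus "\<pi> l * v l = \<pi> l * (c l - lam + pv n P (\<rho> l) v)" by simp
    qed
    also have "\<dots> = (\<Sum>l<n. c l * \<pi> l) - lam * (\<Sum>l<n. \<pi> l) + (\<Sum>l<n. \<pi> l * pv n P (\<rho> l) v)"
      by (simp add: algebra_simps sum.distrib sum_subtractf sum_distrib_left)
    finally show ?thesis using s1 s3 s4 by simp
  qed
  have finND: "finite ND" unfolding ND_def by auto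
  have X0card: "card X0 \<le> n" unfolding X0_def using card_image_le[of "{..<n}" \<rho>] by simp
  have X0fin: "finite X0" unfolding X0_def by simp
  have Cfin: "finite C" using C(1) X0fin finite_subset by blast
  have cardC: "card C \<le> n" using card_mono[OF X0fin C(1)] X0card by simp
  have Cq: "C \<subseteq> {..<q}" using C(1) rhoq unfolding X0_def by auto
  have Mge: "real_of_int M ^ k \<in> \<int>" for k by simp
  obtain e where e: "e \<le> min (card ND) (n - 1)" "\<forall>h<q. real_of_int M ^ e * \<psi> h \<in> \<int>"
      "\<forall>l<n. real_of_int M ^ e * \<pi> l \<in> \<int>"
  proof (cases "card (C \<inter> ND) \<le> n - 1")
    case True
    define e0 where "e0 = card (C \<inter> ND)"
    have e0ND: "e0 \<le> card ND" unfolding e0_def using finND by (intro card_mono) auto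
    have A: "real_of_int M ^ e0 * \<psi> h \<in> \<int>" if h: "h < q" for h
    proof -
      define c' where "c' = card (C \<inter> ND - {h})"
      have "c' \<le> e0" unfolding c'_def e0_def using Cfin by (intro card_mono) auto
      hence "real_of_int M ^ e0 = real_of_int M ^ (e0 - c') * real_of_int M ^ c'"
        by (simp add: power_add[symmetric])
      hence "real_of_int M ^ e0 * \<psi> h = real_of_int M ^ (e0 - c') * (real_of_int M ^ c' * \<psi> h)" by simp
      thus ?thesis using intg h Mge unfolding c'_def by (metis Ints_mult)
    qed
    have B: "real_of_int M ^ e0 * \<pi> l \<in> \<int>" if l: "l < n" for l
    proof -
      have "real_of_int M ^ e0 * \<pi> l = (\<Sum>h<q. real_of_int M ^ e0 * \<psi> h * P h l)"
        unfolding \<pi>_def sum_distrib_left by (simp add: ac_simps)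
      also have "\<dots> \<in> \<int>"
      proof (rule Ints_sum)
        fix h assume h: "h \<in> {..<q}"
        show "real_of_int M ^ e0 * \<psi> h * P h l \<in> \<int>"
        proof (cases "h \<in> C")
          case False thus ?thesis using psiC h by simp
        next
          case hC: True
          show ?thesis
          proof (cases "h \<in> ND")
            case True
            have "card (C \<inter> ND - {h}) = e0 - 1" unfolding e0_def using True hC Cfin by simp
            moreover have "e0 \<ge> 1" unfolding e0_def using True hC Cfin by (metis One_nat_def Suc_leI card_gt_0_iff IntI empty_iff finite_Int)
            ultimately have "real_of_int M ^ e0 * \<psi> h * P h l = (real_of_int M ^ card (C \<inter> ND - {h}) * \<psi> h) * (real_of_int M * P h l)"
              by (simp add: power_eq_if[of _ e0] ac_simps)
            thus ?thesis using intg h MP_int[OF _ l] by (metis Ints_mult lessThan_iff)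
          next
            case False
            have "\<not> nd n P h" using False h unfolding ND_def by auto
            hence "P h l \<in> \<int>" using det_int h l by auto
            thus ?thesis using A h by (metis Ints_mult lessThan_iff)
          qed
        qed
      qed
      finally show ?thesis .
    qed
    show ?thesis using that[of e0] True e0ND A B unfolding e0_def by auto
  next
    case False
    hence e0n: "card (C \<inter> ND) \<ge> n" by simp
    have cCND: "card (C \<inter> ND) \<le> card C" using Cfin by (intro card_mono) auto
    have cC: "card C = n" using e0n cCND cardC by simp
    have CND: "C \<inter> ND = C" using card_subset_eq[OF Cfin, of "C \<inter> ND"] e0n cC cCND by auto
    have CX: "C = X0" using card_seteq[OF X0fin C(1)] cC X0card by simp
    have inj: "inj_on \<rho> {..<n}"
    proof -
      have "card (\<rho> ` {..<n}) = card {..<n}" using CX cC unfolding X0_def by simp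
      thus ?thesis by (rule eq_card_imp_inj_on[OF finite_lessThan])
    qed
    have NDn: "card ND \<ge> n" using card_mono[OF finND, of "C \<inter> ND"] e0n by auto
    have A: "real_of_int M ^ (n - 1) * \<psi> h \<in> \<int>" if h: "h < q" for h
    proof (cases "h \<in> C")
      case True
      have "card (C \<inter> ND - {h}) = n - 1" using CND cC True Cfin by simp
      thus ?thesis using intg h by metis
    next
      case False thus ?thesis using psiC h by simp
    qed
    have pieq: "\<pi> l = \<psi> (\<rho> l)" if l: "l < n" for l
    proof -
      have "K x (\<rho> l) = P x l" for x
      proof -
        have "K x (\<rho> l) = (\<Sum>l'<n. if l' = l then P x l' else 0)"
          unfolding K_def using inj l by (intro sum.cong refl) (auto dest: inj_onD)
        thus ?thesis using l by simp
      qed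
      hence "\<pi> l = (\<Sum>x<q. \<psi> x * K x (\<rho> l))" unfolding \<pi>_def by simp
      thus ?thesis using stat rhoq[OF l] by simp
    qed
    show ?thesis using that[of "n - 1"] NDn A pieq rhoq by auto
  qed
  define Nu where "Nu = (\<Sum>l<n. c l * (real_of_int M ^ e * \<pi> l))"
  define Den where "Den = real_of_int M ^ e * (\<Sum>h<q. \<psi> h)"
  have NuI: "Nu \<in> \<int>" unfolding Nu_def
  proof (rule Ints_sum)
    fix l assume "l \<in> {..<n}"
    hence l: "l < n" by simp
    have "real_of_int M ^ e * \<pi> l \<in> \<int>" using e(3) l by blast
    thus "c l * (real_of_int M ^ e * \<pi> l) \<in> \<int>" using Ints_mult[OF cint[OF l]] by blast
  qed
  have lamDen: "lam * Den = Nu"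
  proof -
    have "lam * Den = real_of_int M ^ e * (lam * (\<Sum>h<q. \<psi> h))" unfolding Den_def by (simp add: ac_simps)
    also have "\<dots> = real_of_int M ^ e * (\<Sum>l<n. c l * \<pi> l)" using key by simp
    also have "\<dots> = Nu" unfolding Nu_def sum_distrib_left by (simp add: ac_simps)
    finally show ?thesis .
  qed
  obtain c0 where c0: "c0 \<in> C" "\<psi> c0 > 0" using psipos by blast
  have sum_pos: "(\<Sum>h<q. \<psi> h) > 0"
  proof -
    have "\<psi> c0 \<le> (\<Sum>h<q. \<psi> h)" using c0 Cq psi01 by (intro member_le_sum) auto
    thus ?thesis using c0 by simp
  qed
  have sum_le: "(\<Sum>h<q. \<psi> h) \<le> real n"
  proof -
    have "(\<Sum>h<q. \<psi> h) = (\<Sum>h\<in>C. \<psi> h)" using Cq psiC by (intro sum.mono_neutral_right) auto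
    also have "\<dots> \<le> (\<Sum>h\<in>C. 1)" using psi01 Cq by (intro sum_mono) auto
    also have "\<dots> = real (card C)" by simp
    also have "\<dots> \<le> real n" using cardC by simp
    finally show ?thesis .
  qed
  have Mp: "real_of_int M > 0" using M_pos by simp
  have Den_pos: "Den > 0" unfolding Den_def using sum_pos Mp by simp
  have Den_le: "Den \<le> real n * real_of_int M ^ min (card ND) (n - 1)"
  proof -
    have "real_of_int M ^ e \<le> real_of_int M ^ min (card ND) (n - 1)" using e(1) Mr' by (intro power_increasing) auto
    hence "Den \<le> real_of_int M ^ min (card ND) (n - 1) * (\<Sum>h<q. \<psi> h)" unfolding Den_def using sum_pos by (intro mult_right_mono) auto
    also have "\<dots> \<le> real_of_int M ^ min (card ND) (n - 1) * real n" using sum_le Mp by (intro mult_left_mono) auto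
    finally show ?thesis by (simp add: ac_simps)
  qed
  have "Nu \<noteq> 0" using lamDen ne Den_pos by auto
  hence Nu1: "\<bar>Nu\<bar> \<ge> 1" using NuI by (rule Ints_nonzero_abs_ge1[rotated])
  have "\<bar>Nu\<bar> = \<bar>lam * Den\<bar>" using lamDen by simp
  also have "\<dots> = \<bar>lam\<bar> * Den" using Den_pos unfolding abs_mult by simp
  finally have "\<bar>Nu\<bar> = \<bar>lam\<bar> * Den" .
  hence "\<bar>lam\<bar> = \<bar>Nu\<bar> / Den" using Den_pos by (simp add: field_simps)
  also have "\<dots> \<ge> 1 / Den" using Nu1 Den_pos by (intro divide_right_mono) auto
  finally have "1 / Den \<le> \<bar>lam\<bar>" .
  moreover have "1 / (real n * real_of_int M ^ min (card ND) (n - 1)) \<le> 1 / Den"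
    using Den_pos Den_le by (intro divide_left_mono) auto
  ultimately show ?thesis unfolding ND_def by linarith
qed

end

context game
begin

lemma final:
  assumes bias: "has_bias n F" and rho_ne: "ergodic_const n F \<noteq> 0"
  shows "(\<exists>l. \<not> vi_continue n F l) \<and> real (vi_stop n F) \<le> 10 * real n ^ 3 * W * real_of_int M ^ (2 * kap)
    \<and> (vi_answer_min_wins n F \<longleftrightarrow> ergodic_const n F < 0)"
proof -
  obtain lam v where b: "is_bias n F lam v" using bias unfolding has_bias_def by blast
  have erg: "ergodic_const n F = lam" using ergodic_eq[OF b] .
  have ne: "lam \<noteq> 0" using rho_ne erg by simp
  define Mk where "Mk = real_of_int M ^ kap"
  have Mk1: "Mk \<ge> 1" unfolding Mk_def using Mr by simp
  have lb: "1 / (real n * Mk) \<le> \<bar>lam\<bar>" using lam_lb[OF b ne] unfolding Mk_def num_nondet_eq .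
  have lW: "\<bar>lam\<bar> \<le> W" using lam_le_W[OF b] .
  have npos: "real n \<ge> 1" using n_pos by simp
  have alam: "\<bar>lam\<bar> > 0" using ne by simp
  define Cs where "Cs = real (n - 1) * (W + \<bar>lam\<bar>) * Mk"
  have Cs0: "Cs \<ge> 0" unfolding Cs_def using lW Mk1 by (intro mult_nonneg_nonneg) auto
  have ex_stop: "\<exists>l0. \<not> vi_continue n F l0 \<and> real l0 \<le> Cs / \<bar>lam\<bar> + 1"
  proof (cases "lam > 0")
    case True
    obtain w where w: "\<forall>j<n. lam + w j \<le> F w j \<and> w j \<le> 0 \<and>
      - (real (n - 1) * (W + \<bar>lam\<bar>) * real_of_int M ^ kap) \<le> w j" using span_pos[OF b] by blast
    have w1: "lam + w j \<le> F w j" and w3: "- Cs \<le> w j" and w2: "w j \<le> 0" if "j < n" for j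
      using w that unfolding Cs_def Mk_def by auto
    have low: "real k * lam + w j \<le> value_iter F k j" if "j < n" for k j
      using that
    proof (induction k arbitrary: j)
      case 0 then show ?case using w2 by (simp add: value_iter_def)
    next
      case (Suc k)
      have "real (Suc k) * lam + w j \<le> F w j + real k * lam" using w1[OF Suc.prems] by (simp add: algebra_simps)
      also have "\<dots> = F (\<lambda>l. w l + real k * lam) j" using F_shift[OF Suc.prems] by simp
      also have "\<dots> \<le> F (value_iter F k) j" using Suc.IH by (intro F_mono[OF Suc.prems]) (simp add: add.commute)
      also have "\<dots> = value_iter F (Suc k) j" unfolding value_iter_def by simp
      finally show ?case .
    qed
    define l0 where "l0 = nat \<lfloor>Cs / lam\<rfloor> + 1"
    have "real l0 > Cs / lam" unfolding l0_def using Cs0 True by linarith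
    hence l0g: "real l0 * lam > Cs" using True by (simp add: field_simps)
    have "value_iter F l0 j > 0" if "j < n" for j using low[OF that, of l0] w3[OF that] l0g by linarith
    hence "Min (value_iter F l0 ` {..<n}) > 0" using n_pos by (subst Min_gr_iff) (auto simp: lessThan_empty_iff)
    hence "\<not> vi_continue n F l0" unfolding vi_continue_def by simp
    moreover have "real l0 \<le> Cs / \<bar>lam\<bar> + 1" unfolding l0_def using True Cs0 by simp
    ultimately show ?thesis by blast
  next
    case False
    hence neg: "lam < 0" using ne by simp
    obtain w where w: "\<forall>j<n. F w j \<le> lam + w j \<and> w j \<ge> 0 \<and>
      w j \<le> real (n - 1) * (W + \<bar>lam\<bar>) * real_of_int M ^ kap" using span_neg[OF b] by blast
    have w1: "F w j \<le> lam + w j" and w3: "w j \<le> Cs" and w2: "w j \<ge> 0" if "j < n" for j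
      using w that unfolding Cs_def Mk_def by auto
    have up: "value_iter F k j \<le> real k * lam + w j" if "j < n" for k j
      using that
    proof (induction k arbitrary: j)
      case 0 then show ?case using w2 by (simp add: value_iter_def)
    next
      case (Suc k)
      have "value_iter F (Suc k) j = F (value_iter F k) j" unfolding value_iter_def by simp
      also have "\<dots> \<le> F (\<lambda>l. w l + real k * lam) j" using Suc.IH by (intro F_mono[OF Suc.prems]) (simp add: add.commute)
      also have "\<dots> = F w j + real k * lam" using F_shift[OF Suc.prems] by simp
      also have "\<dots> \<le> real (Suc k) * lam + w j" using w1[OF Suc.prems] by (simp add: algebra_simps)
      finally show ?case .
    qed
    define l0 where "l0 = nat \<lfloor>Cs / (- lam)\<rfloor> + 1"
    have "real l0 > Cs / (- lam)" unfolding l0_def using Cs0 neg by linarith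
    hence l0g: "real l0 * (- lam) > Cs" using neg by (simp add: field_simps)
    have "value_iter F l0 j < 0" if "j < n" for j using up[OF that, of l0] w3[OF that] l0g by linarith
    hence "Max (value_iter F l0 ` {..<n}) < 0" using n_pos by (subst Max_less_iff) (auto simp: lessThan_empty_iff)
    hence "\<not> vi_continue n F l0" unfolding vi_continue_def by simp
    moreover have "real l0 \<le> Cs / \<bar>lam\<bar> + 1"
    proof -
      have "Cs / (- lam) \<ge> 0" using neg Cs0 by (intro divide_nonneg_pos) auto
      hence "real (nat \<lfloor>Cs / (- lam)\<rfloor>) \<le> Cs / (- lam)" by (rule of_nat_floor)
      thus ?thesis unfolding l0_def using neg by simp
    qed
    ultimately show ?thesis by blast
  qed
  then obtain l0 where l0: "\<not> vi_continue n F l0" "real l0 \<le> Cs / \<bar>lam\<bar> + 1" by blast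
  have Nle: "vi_stop n F \<le> l0" unfolding vi_stop_def using l0(1) by (rule Least_le)
  have inv: "1 / \<bar>lam\<bar> \<le> real n * Mk"
    using lb alam npos Mk1 by (simp add: field_simps)
  have c1: "Cs / \<bar>lam\<bar> \<le> Cs * (real n * Mk)" using inv Cs0 by (simp add: divide_inverse mult_left_mono)
  have c2: "Cs \<le> (real n - 1) * (2 * W) * Mk"
  proof -
    have "real (n - 1) = real n - 1" using n_pos by simp
    moreover have "(real n - 1) * (W + \<bar>lam\<bar>) \<le> (real n - 1) * (2 * W)"
      using lW npos by (intro mult_left_mono) auto
    ultimately show ?thesis unfolding Cs_def using Mk1 by (intro mult_right_mono) auto
  qed
  have WM: "1 \<le> real n * W * Mk"
  proof -
    have "1 \<le> \<bar>lam\<bar> * (real n * Mk)" using lb npos Mk1 by (simp add: field_simps)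
    also have "\<dots> \<le> W * (real n * Mk)" using lW npos Mk1 by (intro mult_right_mono) auto
    finally show ?thesis by (simp add: ac_simps)
  qed
  have M2: "real_of_int M ^ (2 * kap) = Mk * Mk" unfolding Mk_def by (simp add: power_add[symmetric] mult_2)
  define X where "X = W * (Mk * Mk)"
  have X0: "X \<ge> 0" unfolding X_def using lW Mk1 by simp
  have one: "1 \<le> real n * X"
  proof -
    have "0 \<le> real n * W * Mk" using WM by linarith
    hence "real n * W * Mk * 1 \<le> real n * W * Mk * Mk" using Mk1 by (intro mult_left_mono) auto
    thus ?thesis using WM unfolding X_def by (simp add: ac_simps)
  qed
  have "real (vi_stop n F) \<le> real l0" using Nle by simp
  also have "\<dots> \<le> Cs * (real n * Mk) + 1" using l0(2) c1 by simp
  also have "\<dots> \<le> (real n - 1) * (2 * W) * Mk * (real n * Mk) + 1"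
    using c2 npos Mk1 by (intro add_right_mono mult_right_mono) auto
  also have "\<dots> = 2 * (real n - 1) * real n * X + 1" unfolding X_def by (simp add: ac_simps)
  also have "\<dots> \<le> 2 * (real n - 1) * real n * X + real n * X" using one by simp
  also have "\<dots> \<le> 10 * real n ^ 3 * X"
  proof -
    have a1: "real n * real n * 1 \<le> real n * real n * real n" using npos by (intro mult_left_mono) auto
    have a2: "real n ^ 3 = real n * real n * real n" by (simp add: power3_eq_cube)
    have a3: "2 * (real n - 1) * real n = 2 * (real n * real n) - 2 * real n" by (simp add: algebra_simps)
    have a4: "real n * real n \<ge> 0" by simp
    have "2 * (real n - 1) * real n + real n \<le> 10 * real n ^ 3" using a1 a2 a3 a4 npos by linarith
    hence "(2 * (real n - 1) * real n + real n) * X \<le> 10 * real n ^ 3 * X" using X0 by (rule mult_right_mono)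
    thus ?thesis by (simp add: algebra_simps)
  qed
  also have "\<dots> = 10 * real n ^ 3 * W * real_of_int M ^ (2 * kap)" unfolding X_def M2 by (simp add: ac_simps)
  finally have bound: "real (vi_stop n F) \<le> 10 * real n ^ 3 * W * real_of_int M ^ (2 * kap)" .
  have stopN: "\<not> vi_continue n F (vi_stop n F)" unfolding vi_stop_def using l0(1) by (rule LeastI)
  have ans: "vi_answer_min_wins n F \<longleftrightarrow> lam < 0"
  proof (cases "Max (value_iter F (vi_stop n F) ` {..<n}) < 0")
    case True
    thus ?thesis using neg_stop[OF b True] unfolding vi_answer_min_wins_def by simp
  next
    case False
    hence "Min (value_iter F (vi_stop n F) ` {..<n}) > 0" using stopN unfolding vi_continue_def by auto
    hence "lam > 0" using pos_stop[OF b] by blast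
    thus ?thesis using False unfolding vi_answer_min_wins_def by simp
  qed
  show ?thesis using l0(1) bound ans erg by blast
qed

end

theorem mainTheorem11:
  fixes m n q :: nat
    and A B :: "nat \<Rightarrow> nat \<Rightarrow> ereal"
    and P :: "nat \<Rightarrow> nat \<Rightarrow> real"
    and Q :: "nat \<Rightarrow> nat \<Rightarrow> int"
    and M :: int
  assumes n_pos: "n \<ge> 1"
    and A_int: "\<And>i j. i < m \<Longrightarrow> j < n \<Longrightarrow> A i j = -\<infinity> \<or> (\<exists>z::int. A i j = ereal (of_int z))"
    and B_int: "\<And>i h. i < m \<Longrightarrow> h < q \<Longrightarrow> B i h = -\<infinity> \<or> (\<exists>z::int. B i h = ereal (of_int z))"
    and A_col: "\<And>j. j < n \<Longrightarrow> \<exists>i<m. A i j \<noteq> -\<infinity>"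
    and B_row: "\<And>i. i < m \<Longrightarrow> \<exists>h<q. B i h \<noteq> -\<infinity>"
    and P_nonneg: "\<And>i l. i < q \<Longrightarrow> l < n \<Longrightarrow> P i l \<ge> 0"
    and P_stoch: "\<And>i. i < q \<Longrightarrow> (\<Sum>l<n. P i l) = 1"
    and M_pos: "M > 0"
    and P_rat: "\<And>i l. i < q \<Longrightarrow> l < n \<Longrightarrow> P i l = real_of_int (Q i l) / real_of_int M"
    and bias: "has_bias n (shapley m n q A B P)"
    and rho_ne: "ergodic_const n (shapley m n q A B P) \<noteq> 0"
  shows "(\<exists>l. \<not> vi_continue n (shapley m n q A B P) l)
    \<and> real (vi_stop n (shapley m n q A B P))
        \<le> 10 * real n ^ 3 * weight_W m n q A B
           * real_of_int M ^ (2 * min (num_nondet q n P) (n - 1))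
    \<and> (vi_answer_min_wins n (shapley m n q A B P)
        \<longleftrightarrow> ergodic_const n (shapley m n q A B P) < 0)"
proof -
  interpret game m n q A B P Q M
    using n_pos A_int B_int A_col B_row P_nonneg P_stoch M_pos P_rat by unfold_locales auto
  show ?thesis using final[OF bias rho_ne] by simp
qed

end
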